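(* Let $I\subseteq\mathbf{H}_\mathrm{Mat}$ be the linear span of the elements $M-p(M)$, $M\in\mathrm{Mat}$. Then $I$ is a biideal of the bialgebra $(\mathbf{H}_\mathrm{Mat},\searrow,\blacktriangle)$, and the quotient bialgebra $\mathbf{H}_\mathrm{Mat}/I$ is a Hopf algebra, graded (and connected) by the weight. Moreover $\mathbf{H}_\mathrm{Mat}/I$ has as a basis the classes of packed matrices, and, identifying it with $\mathbf{H}_\mathrm{Pack}$, its product is $M\searrow M'$ (block diagonal) and its coproduct is $\blacktriangle(M)=\sum_{M',M''\in\mathcal{M}_{k,l}(\mathbb{N}),\ M=M'+M''}p(M')\otimes p(M'')$ for $M\in\mathrm{Pack}$ with $k$ rows and $l$ columns.
   Context: $\mathcal{M}_{k,l}(\mathbb{N})$ is the set of $k\times l$ matrices with entries in $\mathbb{N}$. $\mathrm{Mat}=\{1\}\cup\bigcup_{k,l\geq1}\mathcal{M}_{k,l}(\mathbb{N})$, where $1$ is the empty matrix ($0$ rows, $0$ columns); $\mathbf{H}_\mathrm{Mat}$ is the $\mathbb{Q}$-vector space with basis $\mathrm{Mat}$. The weight $\omega(M)$ is the sum of the entries of $M$ ($\omega(1)=0$). For $M,M'\in\mathrm{Mat}$, $M\searrow M'=\begin{pmatrix}M&0\\0&M'\end{pmatrix}$ (block diagonal; $1$ is the unit). The coproduct on $\mathbf{H}_\mathrm{Mat}$ is $\blacktriangle(1)=1\otimes 1$ and, for $M\in\mathcal{M}_{k,l}(\mathbb{N})$, $\blacktriangle(M)=\sum_{(M',M'')\in\mathcal{M}_{k,l}(\mathbb{N})^2,\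 M'+M''=M}M'\otimes M''$, with counit $\varepsilon(M)=1$ if $\omega(M)=0$ and $0$ otherwise; $(\mathbf{H}_\mathrm{Mat},\searrow,\blacktriangle)$ is a bialgebra. A packed matrix is an element of $\mathrm{Mat}$ with no zero row and no zero column (the empty matrix $1$ is packed); $\mathrm{Pack}$ denotes the set of packed matrices and $\mathbf{H}_\mathrm{Pack}$ the $\mathbb{Q}$-vector space with basis $\mathrm{Pack}$. For $M\in\mathrm{Mat}$, $p(M)\in\mathrm{Pack}$ is obtained by deleting the zero rows and zero columns of $M$ (so $p$ of a zero matrix is $1$). *)

theory Defs
  imports Complex_Main
begin

text \<open>A matrix is a triple (k, l, f): k rows, l columns, entries f i j for i < k, j < l
  (f vanishes outside this range). Either k, l >= 1, or k = l = 0 (the empty matrix 1).\<close>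

typedef mat = "{(k::nat, l::nat, f::nat \<Rightarrow> nat \<Rightarrow> nat).
   (k = 0 \<longleftrightarrow> l = 0) \<and> (\<forall>i j. (k \<le> i \<or> l \<le> j) \<longrightarrow> f i j = 0)}"
  by (rule exI[of _ "(0, 0, \<lambda>_ _. 0)"]) auto

definition rows :: "mat \<Rightarrow> nat" where "rows M = fst (Rep_mat M)"
definition cols :: "mat \<Rightarrow> nat" where "cols M = fst (snd (Rep_mat M))"
definition entry :: "mat \<Rightarrow> nat \<Rightarrow> nat \<Rightarrow> nat" where "entry M = snd (snd (Rep_mat M))"

definition emptyM :: mat where "emptyM = Abs_mat (0, 0, \<lambda>_ _. 0)"

definition weight :: "mat \<Rightarrow> nat" where
  "weight M = (\<Sum>i<rows M. \<Sum>j<cols M. entry M i j)"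

definition blockdiag :: "mat \<Rightarrow> mat \<Rightarrow> mat" where
  "blockdiag M N = Abs_mat (rows M + rows N, cols M + cols N,
     \<lambda>i j. if i < rows M \<and> j < cols M then entry M i j
           else if rows M \<le> i \<and> cols M \<le> j then entry N (i - rows M) (j - cols M) else 0)"

definition same_shape :: "mat \<Rightarrow> mat \<Rightarrow> bool" where
  "same_shape A B \<longleftrightarrow> rows A = rows B \<and> cols A = cols B"

text \<open>Entrywise sum (used for matrices of the same shape).\<close>
definition madd :: "mat \<Rightarrow> mat \<Rightarrow> mat" where
  "madd A B = Abs_mat (rows A, cols A, \<lambda>i j. entry A i j + entry B i j)"

definition packed :: "mat \<Rightarrow> bool" where
  "packed M \<longleftrightarrow> (\<forall>i<rows M. \<exists>j<cols M. entry M i j \<noteq> 0)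
              \<and> (\<forall>j<cols M. \<exists>i<rows M. entry M i j \<noteq> 0)"

definition pack :: "mat \<Rightarrow> mat" where
  "pack M = (let R = sorted_list_of_set {i. i < rows M \<and> (\<exists>j<cols M. entry M i j \<noteq> 0)};
                 C = sorted_list_of_set {j. j < cols M \<and> (\<exists>i<rows M. entry M i j \<noteq> 0)}
             in Abs_mat (length R, length C,
                  \<lambda>i j. if i < length R \<and> j < length C then entry M (R ! i) (C ! j) else 0))"

text \<open>Elements of H_Mat are finitely supported functions mat => rat (coefficients on the
  basis Mat); elements of H_Mat \<otimes> H_Mat are finitely supported functions on mat \<times> mat
  (the tensor product of free spaces is free on pairs of basis elements).\<close>

definition supp :: "('b \<Rightarrow> rat) \<Rightarrow> 'b set" where "supp x = {M. x M \<noteq> 0}"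

definition fin :: "('b \<Rightarrow> rat) \<Rightarrow> bool" where "fin x \<longleftrightarrow> finite (supp x)"

definition delta :: "'b \<Rightarrow> 'b \<Rightarrow> rat" where "delta M = (\<lambda>N. if N = M then 1 else 0)"

definition lspan :: "('b \<Rightarrow> rat) set \<Rightarrow> ('b \<Rightarrow> rat) set" where
  "lspan S = {v. \<exists>(n::nat) c w. (\<forall>i<n. w i \<in> S) \<and> v = (\<lambda>z. \<Sum>i<n. c i * w i z)}"

definition mult :: "(mat \<Rightarrow> rat) \<Rightarrow> (mat \<Rightarrow> rat) \<Rightarrow> (mat \<Rightarrow> rat)" where
  "mult x y = (\<lambda>N. \<Sum>M\<in>supp x. \<Sum>M'\<in>supp y. if blockdiag M M' = N then x M * y M' else 0)"

definition tens :: "(mat \<Rightarrow> rat) \<Rightarrow> (mat \<Rightarrow> rat) \<Rightarrow> (mat \<times> mat \<Rightarrow> rat)" where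
  "tens a b = (\<lambda>(A, B). a A * b B)"

text \<open>Coproduct: the coefficient of A \<otimes> B in \<blacktriangle>(x) is x(A + B) if A, B have the same shape.\<close>
definition cop :: "(mat \<Rightarrow> rat) \<Rightarrow> (mat \<times> mat \<Rightarrow> rat)" where
  "cop x = (\<lambda>(A, B). if same_shape A B then x (madd A B) else 0)"

definition counit :: "(mat \<Rightarrow> rat) \<Rightarrow> rat" where
  "counit x = (\<Sum>M\<in>supp x. if weight M = 0 then x M else 0)"

definition Iid :: "(mat \<Rightarrow> rat) set" where
  "Iid = lspan {(\<lambda>N. delta M N - delta (pack M) N) | M. True}"

definition Jid :: "(mat \<times> mat \<Rightarrow> rat) set" where
  "Jid = lspan {tens a b | a b. (a \<in> Iid \<and> fin b) \<or> (fin a \<and> b \<in> Iid)}"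

text \<open>m \<circ> (S \<otimes> id) \<circ> \<blacktriangle> and m \<circ> (id \<otimes> S) \<circ> \<blacktriangle>, for a linear map S on H_Mat.\<close>
definition convL :: "((mat \<Rightarrow> rat) \<Rightarrow> (mat \<Rightarrow> rat)) \<Rightarrow> (mat \<Rightarrow> rat) \<Rightarrow> (mat \<Rightarrow> rat)" where
  "convL S x = (\<lambda>N. \<Sum>AB\<in>supp (cop x). cop x AB * mult (S (delta (fst AB))) (delta (snd AB)) N)"

definition convR :: "((mat \<Rightarrow> rat) \<Rightarrow> (mat \<Rightarrow> rat)) \<Rightarrow> (mat \<Rightarrow> rat) \<Rightarrow> (mat \<Rightarrow> rat)" where
  "convR S x = (\<lambda>N. \<Sum>AB\<in>supp (cop x). cop x AB * mult (delta (fst AB)) (S (delta (snd AB))) N)"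

definition linear_map :: "((mat \<Rightarrow> rat) \<Rightarrow> (mat \<Rightarrow> rat)) \<Rightarrow> bool" where
  "linear_map S \<longleftrightarrow> (\<forall>x. fin x \<longrightarrow> fin (S x)) \<and>
     (\<forall>a b x y. fin x \<longrightarrow> fin y \<longrightarrow>
        S (\<lambda>N. a * x N + b * y N) = (\<lambda>N. a * S x N + b * S y N))"

definition homog :: "nat \<Rightarrow> (mat \<Rightarrow> rat) \<Rightarrow> bool" where
  "homog n x \<longleftrightarrow> (\<forall>M. x M \<noteq> 0 \<longrightarrow> weight M = n)"

definition hpart :: "nat \<Rightarrow> (mat \<Rightarrow> rat) \<Rightarrow> (mat \<Rightarrow> rat)" where
  "hpart n x = (\<lambda>M. if weight M = n then x M else 0)"

end

theory Submission
  imports Defs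
begin

lemma mat_valid: "(rows M = 0 \<longleftrightarrow> cols M = 0) \<and> (\<forall>i j. (rows M \<le> i \<or> cols M \<le> j) \<longrightarrow> entry M i j = 0)"
proof -
  obtain k l f where e: "Rep_mat M = (k,l,f)" by (cases "Rep_mat M") auto
  have "(k,l,f) \<in> {(k::nat, l::nat, f::nat \<Rightarrow> nat \<Rightarrow> nat).
   (k = 0 \<longleftrightarrow> l = 0) \<and> (\<forall>i j. (k \<le> i \<or> l \<le> j) \<longrightarrow> f i j = 0)}" using Rep_mat[of M] e by simp
  then show ?thesis using e by (simp add: rows_def cols_def entry_def)
qed

lemma rows0_iff: "rows M = 0 \<longleftrightarrow> cols M = 0" using mat_valid by blast

lemma entry_out: "rows M \<le> i \<or> cols M \<le> j \<Longrightarrow> entry M i j = 0" using mat_valid by blast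

lemma entry_nz: "entry M i j \<noteq> 0 \<Longrightarrow> i < rows M \<and> j < cols M"
  using entry_out[of M i j] by (meson not_le)

lemma Rep_eq: "Rep_mat M = (rows M, cols M, entry M)" by (simp add: rows_def cols_def entry_def)

lemma mat_eq:
  assumes "rows A = rows B" "cols A = cols B" "\<And>i j. i < rows A \<Longrightarrow> j < cols A \<Longrightarrow> entry A i j = entry B i j"
  shows "A = B"
proof -
  have "entry A = entry B"
  proof (intro ext)
    fix i j show "entry A i j = entry B i j"
      using assms entry_out[of A i j] entry_out[of B i j] by (cases "i < rows A \<and> j < cols A") auto
  qed
  then have "Rep_mat A = Rep_mat B" using assms by (simp add: Rep_eq)
  then show ?thesis using Rep_mat_inject by blast
qed

lemma Abs_parts:
  assumes "k = 0 \<longleftrightarrow> l = 0" "\<forall>i j. (k \<le> i \<or> l \<le> j) \<longrightarrow> f i j = 0"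
  shows "rows (Abs_mat (k,l,f)) = k" "cols (Abs_mat (k,l,f)) = l" "entry (Abs_mat (k,l,f)) = f"
  using Abs_mat_inverse[of "(k,l,f)"] assms by (auto simp: rows_def cols_def entry_def)

definition mk :: "nat \<Rightarrow> nat \<Rightarrow> (nat \<Rightarrow> nat \<Rightarrow> nat) \<Rightarrow> mat" where
  "mk k l f = Abs_mat (k, l, \<lambda>i j. if i < k \<and> j < l then f i j else 0)"

lemma mk_parts:
  assumes "k = 0 \<longleftrightarrow> l = 0"
  shows "rows (mk k l f) = k" "cols (mk k l f) = l" "entry (mk k l f) i j = (if i < k \<and> j < l then f i j else 0)"
  using Abs_parts[of k l "\<lambda>i j. if i < k \<and> j < l then f i j else 0"] assms by (auto simp: mk_def)

lemma emptyM_parts[simp]: "rows emptyM = 0" "cols emptyM = 0" "entry emptyM i j = 0"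
  using Abs_parts[of 0 0 "\<lambda>_ _. 0"] by (auto simp: emptyM_def)

lemma rows0_empty: "rows M = 0 \<Longrightarrow> M = emptyM"
  by (rule mat_eq) (auto simp: rows0_iff)

lemma bd_parts:
  "rows (blockdiag M N) = rows M + rows N"
  "cols (blockdiag M N) = cols M + cols N"
  "entry (blockdiag M N) i j = (if i < rows M \<and> j < cols M then entry M i j
           else if rows M \<le> i \<and> cols M \<le> j then entry N (i - rows M) (j - cols M) else 0)"
proof -
  have v: "rows M + rows N = 0 \<longleftrightarrow> cols M + cols N = 0" using rows0_iff[of M] rows0_iff[of N] by auto
  have w: "\<forall>i j. (rows M + rows N \<le> i \<or> cols M + cols N \<le> j) \<longrightarrow> (if i < rows M \<and> j < cols M then entry M i j
           else if rows M \<le> i \<and> cols M \<le> j then entry N (i - rows M) (j - cols M) else 0) = 0"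
    by (auto intro!: entry_out)
  show "rows (blockdiag M N) = rows M + rows N"
       "cols (blockdiag M N) = cols M + cols N"
       "entry (blockdiag M N) i j = (if i < rows M \<and> j < cols M then entry M i j
           else if rows M \<le> i \<and> cols M \<le> j then entry N (i - rows M) (j - cols M) else 0)"
    using Abs_parts[OF v w] by (simp_all add: blockdiag_def)
qed

lemma bd_empty_left[simp]: "blockdiag emptyM X = X"
  by (rule mat_eq) (auto simp: bd_parts)

lemma bd_empty_right[simp]: "blockdiag X emptyM = X"
  by (rule mat_eq) (auto simp: bd_parts entry_out)

lemma bd_assoc: "blockdiag (blockdiag A B) C = blockdiag A (blockdiag B C)"
  by (rule mat_eq) (auto simp: bd_parts entry_out)

lemma weight_mk_aux: "weight M = (\<Sum>i<rows M. \<Sum>j<cols M. entry M i j)" by (simp add: weight_def)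

lemma weight0_iff: "weight M = 0 \<longleftrightarrow> (\<forall>i j. entry M i j = 0)"
proof
  assume "weight M = 0"
  then have "\<forall>i<rows M. \<forall>j<cols M. entry M i j = 0" by (simp add: weight_def)
  then show "\<forall>i j. entry M i j = 0" using entry_out by (metis not_le)
qed (simp add: weight_def)

lemma sum_split_nat: "(\<Sum>i<a+b. f i) = (\<Sum>i<a. f i) + (\<Sum>i<b. f (a + i))" for f :: "nat \<Rightarrow> nat"
  by (induction b) auto

lemma weight_bd: "weight (blockdiag A B) = weight A + weight B"
proof -
  have "weight (blockdiag A B) = (\<Sum>i<rows A + rows B. \<Sum>j<cols A + cols B. entry (blockdiag A B) i j)"
    by (simp add: weight_def bd_parts)
  also have "\<dots> = (\<Sum>i<rows A. \<Sum>j<cols A + cols B. entry (blockdiag A B) i j)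
     + (\<Sum>i<rows B. \<Sum>j<cols A + cols B. entry (blockdiag A B) (rows A + i) j)"
    by (rule sum_split_nat)
  also have "(\<Sum>i<rows A. \<Sum>j<cols A + cols B. entry (blockdiag A B) i j) = weight A"
    by (simp add: sum_split_nat bd_parts weight_def)
  also have "(\<Sum>i<rows B. \<Sum>j<cols A + cols B. entry (blockdiag A B) (rows A + i) j) = weight B"
    by (simp add: sum_split_nat bd_parts weight_def)
  finally show ?thesis .
qed


definition NR :: "mat \<Rightarrow> nat set" where "NR M = {i. i < rows M \<and> (\<exists>j<cols M. entry M i j \<noteq> 0)}"
definition NC :: "mat \<Rightarrow> nat set" where "NC M = {j. j < cols M \<and> (\<exists>i<rows M. entry M i j \<noteq> 0)}"
definition RL where "RL M = sorted_list_of_set (NR M)"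
definition CL where "CL M = sorted_list_of_set (NC M)"

lemma NR_fin[simp]: "finite (NR M)" by (auto simp: NR_def)
lemma NC_fin[simp]: "finite (NC M)" by (auto simp: NC_def)
lemma set_RL[simp]: "set (RL M) = NR M" by (simp add: RL_def)
lemma set_CL[simp]: "set (CL M) = NC M" by (simp add: CL_def)
lemma RL_sorted: "sorted_wrt (<) (RL M)" using strict_sorted_list_of_set[of "NR M"] by (simp add: RL_def)
lemma CL_sorted: "sorted_wrt (<) (CL M)" using strict_sorted_list_of_set[of "NC M"] by (simp add: CL_def)

lemma NR_empty_iff: "NR M = {} \<longleftrightarrow> NC M = {}"
  by (auto simp: NR_def NC_def)

lemma RL_len0: "length (RL M) = 0 \<longleftrightarrow> length (CL M) = 0"
  using NR_empty_iff[of M] by (simp add: RL_def CL_def)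

lemma pack_parts:
  "rows (pack M) = length (RL M)" "cols (pack M) = length (CL M)"
  "entry (pack M) i j = (if i < length (RL M) \<and> j < length (CL M) then entry M (RL M ! i) (CL M ! j) else 0)"
proof -
  have e: "pack M = mk (length (RL M)) (length (CL M)) (\<lambda>i j. entry M (RL M ! i) (CL M ! j))"
    unfolding pack_def mk_def Let_def RL_def CL_def NR_def NC_def by simp
  show "rows (pack M) = length (RL M)" "cols (pack M) = length (CL M)"
    "entry (pack M) i j = (if i < length (RL M) \<and> j < length (CL M) then entry M (RL M ! i) (CL M ! j) else 0)"
    unfolding e using mk_parts[OF RL_len0] by auto
qed

definition smono :: "nat \<Rightarrow> (nat \<Rightarrow> nat) \<Rightarrow> bool" where
  "smono n f \<longleftrightarrow> (\<forall>a b. a < b \<longrightarrow> b < n \<longrightarrow> f a < f b)"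

definition emb :: "mat \<Rightarrow> (nat \<Rightarrow> nat) \<Rightarrow> (nat \<Rightarrow> nat) \<Rightarrow> mat \<Rightarrow> bool" where
  "emb P f g M \<longleftrightarrow> (\<forall>a<rows P. f a < rows M) \<and> (\<forall>b<cols P. g b < cols M)
     \<and> smono (rows P) f \<and> smono (cols P) g
     \<and> (\<forall>a<rows P. \<forall>b<cols P. entry M (f a) (g b) = entry P a b)
     \<and> (\<forall>i j. entry M i j \<noteq> 0 \<longrightarrow> i \<in> f ` {..<rows P} \<and> j \<in> g ` {..<cols P})"

lemma smono_inj: "smono n f \<Longrightarrow> inj_on f {..<n}"
  unfolding smono_def inj_on_def by (metis lessThan_iff linorder_neqE_nat order_less_irrefl)

lemma smono_list: "smono n f \<Longrightarrow> sorted_list_of_set (f ` {..<n}) = map f [0..<n]"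
proof -
  assume s: "smono n f"
  have "sorted_wrt (<) (map f [0..<n])" using s by (auto simp: sorted_wrt_iff_nth_less smono_def)
  moreover have "sorted_wrt (<) (sorted_list_of_set (f ` {..<n}))" using strict_sorted_list_of_set by simp
  moreover have "set (map f [0..<n]) = f ` {..<n}" by auto
  ultimately show ?thesis by (metis strict_sorted_equal set_sorted_list_of_set finite_imageI finite_lessThan)
qed

lemma emb_pack: "emb (pack M) (\<lambda>a. RL M ! a) (\<lambda>b. CL M ! b) M"
proof -
  have r: "\<forall>a<length (RL M). RL M ! a < rows M" using nth_mem[of _ "RL M"] by (auto simp: NR_def)
  have c: "\<forall>b<length (CL M). CL M ! b < cols M" using nth_mem[of _ "CL M"] by (auto simp: NC_def)
  have nz: "entry M i j \<noteq> 0 \<Longrightarrow> i \<in> (\<lambda>a. RL M ! a) ` {..<length (RL M)} \<and> j \<in> (\<lambda>b. CL M ! b) ` {..<length (CL M)}" for i j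
  proof -
    assume "entry M i j \<noteq> 0"
    then have "i \<in> set (RL M)" "j \<in> set (CL M)" using entry_nz[of M i j] by (auto simp: NR_def NC_def)
    then obtain a b where "a < length (RL M)" "RL M ! a = i" "b < length (CL M)" "CL M ! b = j" by (metis in_set_conv_nth)
    then show ?thesis by force
  qed
  show ?thesis unfolding emb_def smono_def pack_parts
    using r c nz RL_sorted[of M] CL_sorted[of M] by (auto simp: sorted_wrt_iff_nth_less)
qed

lemma packed_pack: "packed (pack M)"
  unfolding packed_def
proof (intro conjI allI impI)
  fix a assume a: "a < rows (pack M)"
  then have "RL M ! a \<in> NR M" using nth_mem[of a "RL M"] by (simp add: pack_parts)
  then obtain j where j: "j < cols M" "entry M (RL M ! a) j \<noteq> 0" by (auto simp: NR_def)
  then have "j \<in> set (CL M)" using entry_nz[of M] by (auto simp: NC_def)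
  then obtain b where b: "b < length (CL M)" "CL M ! b = j" by (metis in_set_conv_nth)
  show "\<exists>b<cols (pack M). entry (pack M) a b \<noteq> 0" using a b j by (auto simp: pack_parts)
next
  fix b assume b: "b < cols (pack M)"
  then have "CL M ! b \<in> NC M" using nth_mem[of b "CL M"] by (simp add: pack_parts)
  then obtain i where i: "i < rows M" "entry M i (CL M ! b) \<noteq> 0" by (auto simp: NC_def)
  then have "i \<in> set (RL M)" using entry_nz[of M] by (auto simp: NR_def)
  then obtain a where a: "a < length (RL M)" "RL M ! a = i" by (metis in_set_conv_nth)
  show "\<exists>a<rows (pack M). entry (pack M) a b \<noteq> 0" using a b i by (auto simp: pack_parts)
qed

lemma emb_packed_eq:
  assumes p: "packed P" and e: "emb P f g M"
  shows "pack M = P"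
proof -
  have NRe: "NR M = f ` {..<rows P}"
  proof
    show "NR M \<subseteq> f ` {..<rows P}" using e by (auto simp: NR_def emb_def)
    show "f ` {..<rows P} \<subseteq> NR M"
    proof
      fix i assume "i \<in> f ` {..<rows P}"
      then obtain a where a: "a < rows P" "i = f a" by auto
      then obtain b where b: "b < cols P" "entry P a b \<noteq> 0" using p by (auto simp: packed_def)
      then show "i \<in> NR M" using a e by (auto simp: NR_def emb_def)
    qed
  qed
  have NCe: "NC M = g ` {..<cols P}"
  proof
    show "NC M \<subseteq> g ` {..<cols P}" using e by (auto simp: NC_def emb_def)
    show "g ` {..<cols P} \<subseteq> NC M"
    proof
      fix j assume "j \<in> g ` {..<cols P}"
      then obtain b where b: "b < cols P" "j = g b" by auto
      then obtain a where a: "a < rows P" "entry P a b \<noteq> 0" using p by (auto simp: packed_def)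
      then show "j \<in> NC M" using b e by (auto simp: NC_def emb_def)
    qed
  qed
  have RLe: "RL M = map f [0..<rows P]" using NRe smono_list e by (simp add: RL_def emb_def)
  have CLe: "CL M = map g [0..<cols P]" using NCe smono_list e by (simp add: CL_def emb_def)
  show ?thesis
    by (rule mat_eq) (use e in \<open>auto simp: pack_parts RLe CLe emb_def\<close>)
qed

lemma emb_id: "emb P id id P"
  unfolding emb_def smono_def using entry_nz by fastforce

lemma pack_packed: "packed P \<Longrightarrow> pack P = P"
  using emb_packed_eq emb_id by blast

lemma pack_pack[simp]: "pack (pack M) = pack M"
  using pack_packed packed_pack by blast

lemma emb_trans:
  assumes e1: "emb P f g M" and e2: "emb M f' g' N"
  shows "emb P (f' \<circ> f) (g' \<circ> g) N"
  unfolding emb_def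
proof (intro conjI allI impI)
  show "\<And>a. a < rows P \<Longrightarrow> (f' \<circ> f) a < rows N" using e1 e2 by (auto simp: emb_def)
  show "\<And>b. b < cols P \<Longrightarrow> (g' \<circ> g) b < cols N" using e1 e2 by (auto simp: emb_def)
  show "smono (rows P) (f' \<circ> f)" using e1 e2 unfolding emb_def smono_def
    by (metis comp_apply order.strict_trans)
  show "smono (cols P) (g' \<circ> g)" using e1 e2 unfolding emb_def smono_def
    by (metis comp_apply order.strict_trans)
  show "\<And>a b. a < rows P \<Longrightarrow> b < cols P \<Longrightarrow> entry N ((f' \<circ> f) a) ((g' \<circ> g) b) = entry P a b"
    using e1 e2 by (auto simp: emb_def)
  fix i j assume nz: "entry N i j \<noteq> 0"
  have "i \<in> f' ` {..<rows M}" "j \<in> g' ` {..<cols M}" using e2 nz by (auto simp: emb_def)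
  then obtain a' b' where ab': "a' < rows M" "b' < cols M" "i = f' a'" "j = g' b'" by blast
  then have "entry M a' b' \<noteq> 0" using e2 nz by (auto simp: emb_def)
  then have "a' \<in> f ` {..<rows P}" "b' \<in> g ` {..<cols P}" using e1 by (auto simp: emb_def)
  then obtain a b where "a < rows P" "b < cols P" "a' = f a" "b' = g b" by blast
  then show "i \<in> (f' \<circ> f) ` {..<rows P}" "j \<in> (g' \<circ> g) ` {..<cols P}" using ab' by auto
qed

lemma emb_pack_eq: "emb P f g M \<Longrightarrow> pack M = pack P"
  using emb_packed_eq[OF packed_pack emb_trans[OF emb_pack]] by blast

lemma emb_weight:
  assumes e: "emb P f g M" shows "weight P = weight M"
proof -
  have sf: "f ` {..<rows P} \<subseteq> {..<rows M}" "g ` {..<cols P} \<subseteq> {..<cols M}" using e by (auto simp: emb_def)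
  have "weight M = (\<Sum>i\<in>f ` {..<rows P}. \<Sum>j<cols M. entry M i j)"
    unfolding weight_def
  proof (rule sum.mono_neutral_right)
    show "\<forall>i\<in>{..<rows M} - f ` {..<rows P}. (\<Sum>j<cols M. entry M i j) = 0"
      using e by (auto simp: emb_def)
  qed (use sf in auto)
  also have "\<dots> = (\<Sum>i\<in>f ` {..<rows P}. \<Sum>j\<in>g ` {..<cols P}. entry M i j)"
  proof (rule sum.cong[OF refl], rule sum.mono_neutral_right)
    show "\<And>i. \<forall>j\<in>{..<cols M} - g ` {..<cols P}. entry M i j = 0"
      using e by (auto simp: emb_def)
  qed (use sf in auto)
  also have "\<dots> = (\<Sum>a<rows P. \<Sum>b<cols P. entry M (f a) (g b))"
    using smono_inj[of "rows P" f] smono_inj[of "cols P" g] e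
    by (simp add: sum.reindex emb_def)
  also have "\<dots> = weight P" using e by (simp add: weight_def emb_def)
  finally show ?thesis by simp
qed

lemma weight_pack[simp]: "weight (pack M) = weight M"
  using emb_weight[OF emb_pack] by simp

lemma pack_zero: "weight M = 0 \<Longrightarrow> pack M = emptyM"
  by (rule mat_eq) (auto simp: pack_parts weight0_iff RL_def NR_def CL_def NC_def)

lemma pack_empty[simp]: "pack emptyM = emptyM" by (rule pack_zero) (simp add: weight0_iff)

definition bdf :: "nat \<Rightarrow> nat \<Rightarrow> (nat \<Rightarrow> nat) \<Rightarrow> (nat \<Rightarrow> nat) \<Rightarrow> nat \<Rightarrow> nat" where
  "bdf p m f f' a = (if a < p then f a else m + f' (a - p))"

lemma smono_bdf: "smono p f \<Longrightarrow> smono q f' \<Longrightarrow> (\<forall>a<p. f a < m) \<Longrightarrow> smono (p+q) (bdf p m f f')"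
  unfolding smono_def bdf_def
proof (intro allI impI)
  fix a b assume s: "\<forall>a b. a < b \<longrightarrow> b < p \<longrightarrow> f a < f b" "\<forall>a b. a < b \<longrightarrow> b < q \<longrightarrow> f' a < f' b"
    "\<forall>a<p. f a < m" "a < b" "b < p + q"
  show "(if a < p then f a else m + f' (a - p)) < (if b < p then f b else m + f' (b - p))"
  proof (cases "b < p")
    case True then show ?thesis using s by auto
  next
    case False
    then have "b - p < q" using s by auto
    show ?thesis
    proof (cases "a < p")
      case True then show ?thesis using s False by fastforce
    next
      case F2: False
      then have "a - p < b - p" using s by auto
      then show ?thesis using s F2 False \<open>b - p < q\<close> by auto
    qed
  qed
qed

lemma emb_bd:
  assumes e1: "emb P f g M" and e2: "emb Q f' g' N"
  shows "emb (blockdiag P Q) (bdf (rows P) (rows M) f f') (bdf (cols P) (cols M) g g') (blockdiag M N)"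
  unfolding emb_def
proof (intro conjI allI impI)
  show "\<And>a. a < rows (blockdiag P Q) \<Longrightarrow> bdf (rows P) (rows M) f f' a < rows (blockdiag M N)"
    using e1 e2 by (auto simp: emb_def bd_parts bdf_def)
  show "\<And>b. b < cols (blockdiag P Q) \<Longrightarrow> bdf (cols P) (cols M) g g' b < cols (blockdiag M N)"
    using e1 e2 by (auto simp: emb_def bd_parts bdf_def)
  show "smono (rows (blockdiag P Q)) (bdf (rows P) (rows M) f f')"
    using e1 e2 smono_bdf unfolding emb_def bd_parts by blast
  show "smono (cols (blockdiag P Q)) (bdf (cols P) (cols M) g g')"
    using e1 e2 smono_bdf unfolding emb_def bd_parts by blast
  show "\<And>a b. a < rows (blockdiag P Q) \<Longrightarrow> b < cols (blockdiag P Q) \<Longrightarrow>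
     entry (blockdiag M N) (bdf (rows P) (rows M) f f' a) (bdf (cols P) (cols M) g g' b) = entry (blockdiag P Q) a b"
    using e1 e2 by (auto simp: emb_def bd_parts bdf_def)
  fix i j assume nz: "entry (blockdiag M N) i j \<noteq> 0"
  have conj: "i \<in> bdf (rows P) (rows M) f f' ` {..<rows (blockdiag P Q)} \<and>
        j \<in> bdf (cols P) (cols M) g g' ` {..<cols (blockdiag P Q)}"
  proof (cases "i < rows M \<and> j < cols M")
    case True
    then have "entry M i j \<noteq> 0" using nz by (simp add: bd_parts)
    then have "i \<in> f ` {..<rows P}" "j \<in> g ` {..<cols P}" using e1 by (auto simp: emb_def)
    then obtain a b where "a < rows P" "b < cols P" "i = f a" "j = g b" by blast
    then have "a < rows P" "b < cols P" "i = bdf (rows P) (rows M) f f' a" "j = bdf (cols P) (cols M) g g' b" by (auto simp: bdf_def)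
    then show ?thesis by (auto simp: bd_parts)
  next
    case False
    then have c: "rows M \<le> i" "cols M \<le> j" "entry N (i - rows M) (j - cols M) \<noteq> 0" using nz by (auto simp: bd_parts split: if_splits)
    then have "i - rows M \<in> f' ` {..<rows Q}" "j - cols M \<in> g' ` {..<cols Q}" using e2 by (auto simp: emb_def)
    then obtain a b where ab: "a < rows Q" "b < cols Q" "i - rows M = f' a" "j - cols M = g' b" by blast
    have "i = bdf (rows P) (rows M) f f' (rows P + a)" using ab c by (simp add: bdf_def)
    moreover have "j = bdf (cols P) (cols M) g g' (cols P + b)" using ab c by (simp add: bdf_def)
    ultimately show ?thesis using ab by (auto simp: bd_parts)
  qed
  then show "i \<in> bdf (rows P) (rows M) f f' ` {..<rows (blockdiag P Q)}" by blast
  from conj show "j \<in> bdf (cols P) (cols M) g g' ` {..<cols (blockdiag P Q)}" by blast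
qed


lemma packed_bd: "packed P \<Longrightarrow> packed Q \<Longrightarrow> packed (blockdiag P Q)"
  unfolding packed_def bd_parts
proof (intro conjI allI impI)
  assume p: "(\<forall>i<rows P. \<exists>j<cols P. entry P i j \<noteq> 0) \<and> (\<forall>j<cols P. \<exists>i<rows P. entry P i j \<noteq> 0)"
    and q: "(\<forall>i<rows Q. \<exists>j<cols Q. entry Q i j \<noteq> 0) \<and> (\<forall>j<cols Q. \<exists>i<rows Q. entry Q i j \<noteq> 0)"
  fix i assume i: "i < rows P + rows Q"
  show "\<exists>j<cols P + cols Q. (if i < rows P \<and> j < cols P then entry P i j
      else if rows P \<le> i \<and> cols P \<le> j then entry Q (i - rows P) (j - cols P) else 0) \<noteq> 0"
  proof (cases "i < rows P")
    case True
    then obtain j where "j < cols P" "entry P i j \<noteq> 0" using p by blast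
    then show ?thesis using True by (intro exI[of _ j]) auto
  next
    case False
    then have "i - rows P < rows Q" using i by auto
    then obtain j where "j < cols Q" "entry Q (i - rows P) j \<noteq> 0" using q by blast
    then show ?thesis using False by (intro exI[of _ "cols P + j"]) auto
  qed
next
  assume p: "(\<forall>i<rows P. \<exists>j<cols P. entry P i j \<noteq> 0) \<and> (\<forall>j<cols P. \<exists>i<rows P. entry P i j \<noteq> 0)"
    and q: "(\<forall>i<rows Q. \<exists>j<cols Q. entry Q i j \<noteq> 0) \<and> (\<forall>j<cols Q. \<exists>i<rows Q. entry Q i j \<noteq> 0)"
  fix j assume j: "j < cols P + cols Q"
  show "\<exists>i<rows P + rows Q. (if i < rows P \<and> j < cols P then entry P i j
      else if rows P \<le> i \<and> cols P \<le> j then entry Q (i - rows P) (j - cols P) else 0) \<noteq> 0"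
  proof (cases "j < cols P")
    case True
    then obtain i where "i < rows P" "entry P i j \<noteq> 0" using p by blast
    then show ?thesis using True by (intro exI[of _ i]) auto
  next
    case False
    then have "j - cols P < cols Q" using j by auto
    then obtain i where "i < rows Q" "entry Q i (j - cols P) \<noteq> 0" using q by blast
    then show ?thesis using False by (intro exI[of _ "rows P + i"]) auto
  qed
qed

lemma pack_bd: "pack (blockdiag A B) = blockdiag (pack A) (pack B)"
  by (rule emb_packed_eq[OF packed_bd[OF packed_pack packed_pack] emb_bd[OF emb_pack emb_pack]])


definition le :: "mat \<Rightarrow> mat \<Rightarrow> bool" where
  "le A M \<longleftrightarrow> same_shape A M \<and> (\<forall>i j. entry A i j \<le> entry M i j)"

definition rM :: "mat \<Rightarrow> mat \<Rightarrow> mat" where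
  "rM M A = mk (length (RL M)) (length (CL M)) (\<lambda>a b. entry A (RL M ! a) (CL M ! b))"

lemma rM_parts: "rows (rM M A) = length (RL M)" "cols (rM M A) = length (CL M)"
  "entry (rM M A) a b = (if a < length (RL M) \<and> b < length (CL M) then entry A (RL M ! a) (CL M ! b) else 0)"
  using mk_parts[OF RL_len0] by (auto simp: rM_def)

lemma rM_shape: "same_shape (rM M A) (pack M)"
  by (simp add: same_shape_def rM_parts pack_parts)

lemma RL_lt: "a < length (RL M) \<Longrightarrow> RL M ! a < rows M"
  using nth_mem[of a "RL M"] by (auto simp: NR_def)
lemma CL_lt: "b < length (CL M) \<Longrightarrow> CL M ! b < cols M"
  using nth_mem[of b "CL M"] by (auto simp: NC_def)

lemma le_nz: "le A M \<Longrightarrow> entry A i j \<noteq> 0 \<Longrightarrow> i \<in> NR M \<and> j \<in> NC M"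
proof -
  assume l: "le A M" and nz: "entry A i j \<noteq> 0"
  then have "entry M i j \<noteq> 0" unfolding le_def by (metis le_zero_eq)
  then show ?thesis using entry_nz[of M i j] by (auto simp: NR_def NC_def)
qed

lemma emb_rM: assumes l: "le A M" shows "emb (rM M A) (\<lambda>a. RL M ! a) (\<lambda>b. CL M ! b) A"
proof -
  have sh: "rows A = rows M" "cols A = cols M" using l by (auto simp: le_def same_shape_def)
  have nz: "entry A i j \<noteq> 0 \<Longrightarrow> i \<in> (\<lambda>a. RL M ! a) ` {..<length (RL M)} \<and> j \<in> (\<lambda>b. CL M ! b) ` {..<length (CL M)}" for i j
  proof -
    assume "entry A i j \<noteq> 0"
    then have "i \<in> set (RL M)" "j \<in> set (CL M)" using le_nz[OF l] by auto
    then obtain a b where "a < length (RL M)" "RL M ! a = i" "b < length (CL M)" "CL M ! b = j" by (metis in_set_conv_nth)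
    then show ?thesis by force
  qed
  show ?thesis unfolding emb_def smono_def rM_parts sh
    using RL_lt[of _ M] CL_lt[of _ M] nz RL_sorted[of M] CL_sorted[of M] by (auto simp: sorted_wrt_iff_nth_less)
qed

lemma pack_rM: "le A M \<Longrightarrow> pack (rM M A) = pack A"
  using emb_pack_eq[OF emb_rM] by metis

lemma weight_rM: "le A M \<Longrightarrow> weight (rM M A) = weight A"
  using emb_weight[OF emb_rM] by metis

definition idxR where "idxR M i = the_inv_into {..<length (RL M)} (\<lambda>a. RL M ! a) i"
definition idxC where "idxC M j = the_inv_into {..<length (CL M)} (\<lambda>b. CL M ! b) j"

lemma inj_RL: "inj_on (\<lambda>a. RL M ! a) {..<length (RL M)}"
  using RL_sorted[of M] unfolding inj_on_def
  by (metis lessThan_iff nat_neq_iff order_less_irrefl sorted_wrt_nth_less)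
lemma inj_CL: "inj_on (\<lambda>a. CL M ! a) {..<length (CL M)}"
  using CL_sorted[of M] unfolding inj_on_def
  by (metis lessThan_iff nat_neq_iff order_less_irrefl sorted_wrt_nth_less)

lemma img_RL: "(\<lambda>a. RL M ! a) ` {..<length (RL M)} = NR M"
  by (metis set_RL lessThan_atLeast0 atLeast_upt set_map map_nth)
lemma img_CL: "(\<lambda>a. CL M ! a) ` {..<length (CL M)} = NC M"
  by (metis set_CL lessThan_atLeast0 atLeast_upt set_map map_nth)

lemma idxR_RL: "a < length (RL M) \<Longrightarrow> idxR M (RL M ! a) = a"
  unfolding idxR_def using the_inv_into_f_f[OF inj_RL] by auto
lemma idxC_CL: "b < length (CL M) \<Longrightarrow> idxC M (CL M ! b) = b"
  unfolding idxC_def using the_inv_into_f_f[OF inj_CL] by auto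
lemma RL_idxR: "i \<in> NR M \<Longrightarrow> RL M ! idxR M i = i \<and> idxR M i < length (RL M)"
  unfolding idxR_def using f_the_inv_into_f[OF inj_RL] the_inv_into_into[OF inj_RL] img_RL
  by (metis lessThan_iff subset_refl)
lemma CL_idxC: "j \<in> NC M \<Longrightarrow> CL M ! idxC M j = j \<and> idxC M j < length (CL M)"
  unfolding idxC_def using f_the_inv_into_f[OF inj_CL] the_inv_into_into[OF inj_CL] img_CL
  by (metis lessThan_iff subset_refl)

definition eM :: "mat \<Rightarrow> mat \<Rightarrow> mat" where
  "eM M A = mk (rows M) (cols M) (\<lambda>i j. if i \<in> NR M \<and> j \<in> NC M then entry A (idxR M i) (idxC M j) else 0)"

lemma eM_parts: "rows (eM M A) = rows M" "cols (eM M A) = cols M"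
  "entry (eM M A) i j = (if i \<in> NR M \<and> j \<in> NC M then entry A (idxR M i) (idxC M j) else 0)"
  using mk_parts[OF rows0_iff] by (auto simp: eM_def NR_def NC_def)

lemma rM_eM: "same_shape A (pack M) \<Longrightarrow> rM M (eM M A) = A"
  apply (rule mat_eq)
  using RL_lt CL_lt nth_mem[of _ "RL M"] nth_mem[of _ "CL M"]
  by (auto simp: rM_parts eM_parts same_shape_def pack_parts idxR_RL idxC_CL)

lemma eM_rM: "le A M \<Longrightarrow> eM M (rM M A) = A"
proof (rule mat_eq)
  assume l: "le A M"
  then show "rows (eM M (rM M A)) = rows A" "cols (eM M (rM M A)) = cols A"
    by (auto simp: eM_parts le_def same_shape_def)
  fix i j
  show "entry (eM M (rM M A)) i j = entry A i j"
  proof (cases "i \<in> NR M \<and> j \<in> NC M")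
    case True then show ?thesis using RL_idxR[of i M] CL_idxC[of j M] by (simp add: eM_parts rM_parts)
  next
    case False then show ?thesis using le_nz[OF l, of i j] by (auto simp: eM_parts)
  qed
qed

lemma le_eM: "le A (pack M) \<Longrightarrow> le (eM M A) M"
  unfolding le_def same_shape_def
proof (intro conjI allI)
  assume l: "(rows A = rows (pack M) \<and> cols A = cols (pack M)) \<and> (\<forall>i j. entry A i j \<le> entry (pack M) i j)"
  fix i j
  show "entry (eM M A) i j \<le> entry M i j"
  proof (cases "i \<in> NR M \<and> j \<in> NC M")
    case True
    then have "entry A (idxR M i) (idxC M j) \<le> entry (pack M) (idxR M i) (idxC M j)" using l by blast
    then show ?thesis using True RL_idxR[of i M] CL_idxC[of j M] by (simp add: eM_parts pack_parts)
  next
    case False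
    then have "entry (eM M A) i j = 0" by (auto simp: eM_parts)
    then show ?thesis by simp
  qed
qed (simp_all add: eM_parts)

definition LS :: "mat \<Rightarrow> mat list set" where
  "LS M = {xs. (\<forall>A\<in>set xs. same_shape A M) \<and> (\<forall>i j. entry M i j = (\<Sum>A\<leftarrow>xs. entry A i j))}"

definition D :: "mat \<Rightarrow> mat list set" where
  "D M = {xs \<in> LS M. \<forall>A\<in>set xs. 0 < weight A}"

lemma LS_le: "xs \<in> LS M \<Longrightarrow> A \<in> set xs \<Longrightarrow> le A M"
  unfolding LS_def le_def
proof (intro conjI allI)
  fix i j assume "xs \<in> {xs. (\<forall>A\<in>set xs. same_shape A M) \<and> (\<forall>i j. entry M i j = (\<Sum>A\<leftarrow>xs. entry A i j))}" "A \<in> set xs"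
  then show "entry A i j \<le> entry M i j" using member_le_sum_list[of "entry A i j" "map (\<lambda>A. entry A i j) xs"] by auto
qed auto

lemma sum_list_zero: "(\<Sum>x\<leftarrow>xs. (0::nat)) = 0" by (induction xs) auto

lemma map_rM_LS: assumes "xs \<in> LS M" shows "map (rM M) xs \<in> LS (pack M)"
  unfolding LS_def
proof (intro CollectI conjI ballI allI)
  show "\<And>A. A \<in> set (map (rM M) xs) \<Longrightarrow> same_shape A (pack M)" using rM_shape by auto
  fix a b
  show "entry (pack M) a b = (\<Sum>A\<leftarrow>map (rM M) xs. entry A a b)"
  proof (cases "a < length (RL M) \<and> b < length (CL M)")
    case True then show ?thesis using assms by (simp add: pack_parts rM_parts LS_def o_def)
  next
    case False
    then have z: "\<And>A. entry (rM M A) a b = 0" by (auto simp: rM_parts)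
    have "entry (pack M) a b = 0" using False by (auto simp: pack_parts)
    then show ?thesis using z by (simp add: o_def sum_list_zero)
  qed
qed

lemma map_eM_LS: assumes "ys \<in> LS (pack M)" shows "map (eM M) ys \<in> LS M"
  unfolding LS_def
proof (intro CollectI conjI ballI allI)
  show "\<And>A. A \<in> set (map (eM M) ys) \<Longrightarrow> same_shape A M" by (auto simp: same_shape_def eM_parts)
  fix i j
  show "entry M i j = (\<Sum>A\<leftarrow>map (eM M) ys. entry A i j)"
  proof (cases "i \<in> NR M \<and> j \<in> NC M")
    case True
    then have "entry M i j = entry (pack M) (idxR M i) (idxC M j)" using RL_idxR[of i M] CL_idxC[of j M] by (simp add: pack_parts)
    then show ?thesis using assms True by (simp add: eM_parts LS_def o_def)
  next
    case False
    then have "entry M i j = 0" using entry_nz[of M i j] by (auto simp: NR_def NC_def)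
    then show ?thesis using False by (simp add: eM_parts o_def del: de_Morgan_conj)
  qed
qed

lemma le_pack_LS: "ys \<in> LS (pack M) \<Longrightarrow> A \<in> set ys \<Longrightarrow> same_shape A (pack M)"
  by (simp add: LS_def)

lemma bij_LS: "bij_betw (map (rM M)) (LS M) (LS (pack M))"
proof (rule bij_betw_byWitness[where f'="map (eM M)"])
  show "\<forall>a\<in>LS M. map (eM M) (map (rM M) a) = a"
    using LS_le eM_rM by (simp add: map_idI)
  show "\<forall>a'\<in>LS (pack M). map (rM M) (map (eM M) a') = a'"
    using le_pack_LS rM_eM by (simp add: map_idI)
  show "map (rM M) ` LS M \<subseteq> LS (pack M)" using map_rM_LS by auto
  show "map (eM M) ` LS (pack M) \<subseteq> LS M" using map_eM_LS by auto
qed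

lemma le_refl_shape: "same_shape A (pack M) \<Longrightarrow> le A (pack M) \<or> True" by simp

lemma bij_D: "bij_betw (map (rM M)) (D M) (D (pack M))"
proof (rule bij_betw_byWitness[where f'="map (eM M)"])
  show "\<forall>a\<in>D M. map (eM M) (map (rM M) a) = a"
  proof
    fix xs assume "xs \<in> D M" then have "xs \<in> LS M" by (simp add: D_def)
    then show "map (eM M) (map (rM M) xs) = xs" using LS_le eM_rM by (simp add: map_idI)
  qed
  show "\<forall>a'\<in>D (pack M). map (rM M) (map (eM M) a') = a'"
  proof
    fix xs assume "xs \<in> D (pack M)" then have "xs \<in> LS (pack M)" by (simp add: D_def)
    then show "map (rM M) (map (eM M) xs) = xs" using le_pack_LS rM_eM by (simp add: map_idI)
  qed
  show "map (rM M) ` D M \<subseteq> D (pack M)" using map_rM_LS LS_le weight_rM by (auto simp: D_def)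
  show "map (eM M) ` D (pack M) \<subseteq> D M"
  proof
    fix xs assume "xs \<in> map (eM M) ` D (pack M)"
    then obtain ys where ys: "ys \<in> D (pack M)" "xs = map (eM M) ys" by auto
    have "\<forall>A\<in>set ys. weight (eM M A) = weight A"
    proof
      fix A assume A: "A \<in> set ys"
      then have "le A (pack M)" using LS_le ys by (auto simp: D_def)
      then have "weight (rM M (eM M A)) = weight (eM M A)" using weight_rM le_eM by blast
      then show "weight (eM M A) = weight A" using rM_eM[of A M] le_pack_LS A ys by (auto simp: D_def)
    qed
    then show "xs \<in> D M" using ys map_eM_LS by (auto simp: D_def)
  qed
qed

lemma entry_le_weight: "entry M i j \<le> weight M"
proof (cases "i < rows M \<and> j < cols M")
  case True
  have "entry M i j \<le> (\<Sum>j<cols M. entry M i j)" using True by (intro member_le_sum) auto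
  also have "\<dots> \<le> weight M" unfolding weight_def using True by (intro member_le_sum) auto
  finally show ?thesis .
qed (auto simp: entry_out)

lemma finite_le: "finite {A. le A M}"
proof -
  define K where "K = List.product [0..<rows M] [0..<cols M]"
  define h where "h A = map (\<lambda>(i,j). entry A i j) K" for A
  have inj: "inj_on h {A. le A M}"
  proof (rule inj_onI)
    fix A B assume A: "A \<in> {A. le A M}" and B: "B \<in> {A. le A M}" and e: "h A = h B"
    show "A = B"
    proof (rule mat_eq)
      show "rows A = rows B" "cols A = cols B" using A B by (auto simp: le_def same_shape_def)
      fix i j assume "i < rows A" "j < cols A"
      then have "(i,j) \<in> set K" using A by (auto simp: K_def le_def same_shape_def)
      then show "entry A i j = entry B i j" using e unfolding h_def by (auto simp: map_eq_conv)
    qed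
  qed
  have "h ` {A. le A M} \<subseteq> {xs. set xs \<subseteq> {..weight M} \<and> length xs \<le> length K}"
    by (auto simp: h_def le_def) (metis entry_le_weight le_trans)
  then have "finite (h ` {A. le A M})" using finite_lists_length_le[of "{..weight M}"] finite_subset by blast
  then show ?thesis using finite_imageD inj by blast
qed

lemma sum_list_swap: "(\<Sum>i\<in>I. \<Sum>A\<leftarrow>xs. f A i) = (\<Sum>A\<leftarrow>xs. \<Sum>i\<in>I. f A i)"
  by (induction xs) (auto simp: sum.distrib)

lemma weight_LS: assumes "xs \<in> LS M" shows "weight M = (\<Sum>A\<leftarrow>xs. weight A)"
proof -
  have "weight M = (\<Sum>i<rows M. \<Sum>j<cols M. \<Sum>A\<leftarrow>xs. entry A i j)"
    using assms by (simp add: weight_def LS_def)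
  also have "\<dots> = (\<Sum>A\<leftarrow>xs. \<Sum>i<rows M. \<Sum>j<cols M. entry A i j)"
    by (simp add: sum_list_swap)
  also have "\<dots> = (\<Sum>A\<leftarrow>xs. weight A)"
  proof -
    have "\<forall>A\<in>set xs. (\<Sum>i<rows M. \<Sum>j<cols M. entry A i j) = weight A"
      using assms by (auto simp: LS_def weight_def same_shape_def)
    then show ?thesis by (metis (mono_tags, lifting) map_eq_conv)
  qed
  finally show ?thesis .
qed

lemma len_le_sum: "(\<forall>A\<in>set xs. 0 < (w A :: nat)) \<Longrightarrow> length xs \<le> (\<Sum>A\<leftarrow>xs. w A)"
  by (induction xs) auto

lemma finite_D: "finite (D M)"
proof -
  have "D M \<subseteq> {xs. set xs \<subseteq> {A. le A M} \<and> length xs \<le> weight M}"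
  proof
    fix xs assume xs: "xs \<in> D M"
    then have l: "xs \<in> LS M" and w: "\<forall>A\<in>set xs. 0 < weight A" by (auto simp: D_def)
    have "set xs \<subseteq> {A. le A M}" using LS_le[OF l] by blast
    moreover have "length xs \<le> weight M" using len_le_sum[OF w] weight_LS[OF l] by simp
    ultimately show "xs \<in> {xs. set xs \<subseteq> {A. le A M} \<and> length xs \<le> weight M}" by simp
  qed
  then show ?thesis using finite_lists_length_le[OF finite_le] finite_subset by blast
qed

definition dec :: "mat \<Rightarrow> (mat \<times> mat) set" where
  "dec M = {(A,B). same_shape A B \<and> madd A B = M}"

lemma madd_parts: "same_shape A B \<Longrightarrow> rows (madd A B) = rows A \<and> cols (madd A B) = cols A
   \<and> entry (madd A B) = (\<lambda>i j. entry A i j + entry B i j)"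
proof -
  assume s: "same_shape A B"
  have v: "\<forall>i j. (rows A \<le> i \<or> cols A \<le> j) \<longrightarrow> entry A i j + entry B i j = 0"
    using s entry_out by (auto simp: same_shape_def)
  show ?thesis using Abs_parts[OF rows0_iff v] by (simp add: madd_def)
qed

lemma dec_LS: "(A,B) \<in> dec M \<longleftrightarrow> [A,B] \<in> LS M"
proof
  assume "(A,B) \<in> dec M"
  then have s: "same_shape A B" and e: "madd A B = M" by (auto simp: dec_def)
  show "[A,B] \<in> LS M" using madd_parts[OF s] s e by (auto simp: LS_def same_shape_def)
next
  assume l: "[A,B] \<in> LS M"
  then have s: "same_shape A B" by (auto simp: LS_def same_shape_def)
  have "madd A B = M"
    by (rule mat_eq) (use madd_parts[OF s] l in \<open>auto simp: LS_def same_shape_def\<close>)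
  then show "(A,B) \<in> dec M" using s by (simp add: dec_def)
qed

lemma dec_le: "(A,B) \<in> dec M \<Longrightarrow> le A M \<and> le B M"
proof -
  assume "(A,B) \<in> dec M"
  then have l: "[A,B] \<in> LS M" using dec_LS by blast
  show ?thesis using LS_le[OF l, of A] LS_le[OF l, of B] by simp
qed

lemma finite_dec: "finite (dec M)"
proof -
  have "dec M \<subseteq> {A. le A M} \<times> {A. le A M}" using dec_le by auto
  then show ?thesis using finite_le finite_subset by blast
qed

lemma bij_dec: "bij_betw (\<lambda>(A,B). (rM M A, rM M B)) (dec M) (dec (pack M))"
proof (rule bij_betw_byWitness[where f'="\<lambda>(A,B). (eM M A, eM M B)"])
  show "\<forall>a\<in>dec M. (\<lambda>(A, B). (eM M A, eM M B)) ((\<lambda>(A, B). (rM M A, rM M B)) a) = a"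
  proof
    fix a assume "a \<in> dec M"
    moreover obtain A B where "a = (A,B)" by (cases a)
    ultimately show "(\<lambda>(A, B). (eM M A, eM M B)) ((\<lambda>(A, B). (rM M A, rM M B)) a) = a"
      using dec_le eM_rM by simp
  qed
  show "\<forall>a'\<in>dec (pack M). (\<lambda>(A, B). (rM M A, rM M B)) ((\<lambda>(A, B). (eM M A, eM M B)) a') = a'"
  proof
    fix a assume a: "a \<in> dec (pack M)"
    obtain A B where ab: "a = (A,B)" by (cases a)
    then have l: "[A,B] \<in> LS (pack M)" using a dec_LS by simp
    show "(\<lambda>(A, B). (rM M A, rM M B)) ((\<lambda>(A, B). (eM M A, eM M B)) a) = a"
      using le_pack_LS[OF l, of A] le_pack_LS[OF l, of B] rM_eM ab by simp
  qed
  show "(\<lambda>(A, B). (rM M A, rM M B)) ` dec M \<subseteq> dec (pack M)"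
  proof
    fix y assume "y \<in> (\<lambda>(A, B). (rM M A, rM M B)) ` dec M"
    then obtain A B where ab: "(A,B) \<in> dec M" "y = (rM M A, rM M B)" by auto
    then have "map (rM M) [A,B] \<in> LS (pack M)" using dec_LS map_rM_LS by blast
    then show "y \<in> dec (pack M)" using ab dec_LS by simp
  qed
  show "(\<lambda>(A, B). (eM M A, eM M B)) ` dec (pack M) \<subseteq> dec M"
  proof
    fix y assume "y \<in> (\<lambda>(A, B). (eM M A, eM M B)) ` dec (pack M)"
    then obtain A B where ab: "(A,B) \<in> dec (pack M)" "y = (eM M A, eM M B)" by auto
    then have "map (eM M) [A,B] \<in> LS M" using dec_LS map_eM_LS by blast
    then show "y \<in> dec M" using ab dec_LS by simp
  qed
qed


lemma delta_app: "delta M N = (if N = M then 1 else 0)" by (simp add: delta_def)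

lemma supp_delta[simp]: "supp (delta M) = {M}" by (auto simp: supp_def delta_def)
lemma fin_delta[simp]: "fin (delta M)" by (simp add: fin_def)

lemma not_supp: "x M = 0 \<longleftrightarrow> M \<notin> supp x" by (simp add: supp_def)

lemma sum_supp_super: "finite F \<Longrightarrow> supp x \<subseteq> F \<Longrightarrow> (\<And>M. x M = 0 \<Longrightarrow> h M = 0) \<Longrightarrow> sum h (supp x) = sum h F"
  by (rule sum.mono_neutral_left) (auto simp: supp_def)

lemma sum_nz: assumes "sum f A \<noteq> 0" shows "\<exists>a\<in>A. f a \<noteq> 0"
proof (rule ccontr)
  assume "\<not> (\<exists>a\<in>A. f a \<noteq> 0)"
  then have "\<forall>a\<in>A. f a = 0" by blast
  then have "sum f A = 0" by (rule sum.neutral)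
  then show False using assms by simp
qed

lemma lspan_zero: "(\<lambda>_. 0) \<in> lspan S"
  unfolding lspan_def by (rule CollectI, rule exI[of _ 0]) auto

lemma lspan_gen: "w \<in> S \<Longrightarrow> w \<in> lspan S"
  unfolding lspan_def by (rule CollectI, rule exI[of _ 1], rule exI[of _ "\<lambda>_. 1"], rule exI[of _ "\<lambda>_. w"]) auto

lemma lspan_add:
  assumes "u \<in> lspan S" "v \<in> lspan S"
  shows "(\<lambda>z. a * u z + b * v z) \<in> lspan S"
proof -
  have "\<exists>(n::nat) c w. (\<forall>i<n. w i \<in> S) \<and> u = (\<lambda>z. \<Sum>i<n. c i * w i z)" using assms(1) by (simp add: lspan_def)
  then obtain n1 :: nat and c1 w1 where 1: "\<forall>i<n1. w1 i \<in> S" "u = (\<lambda>z. \<Sum>i<n1. c1 i * w1 i z)" by blast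
  have "\<exists>(n::nat) c w. (\<forall>i<n. w i \<in> S) \<and> v = (\<lambda>z. \<Sum>i<n. c i * w i z)" using assms(2) by (simp add: lspan_def)
  then obtain n2 :: nat and c2 w2 where 2: "\<forall>i<n2. w2 i \<in> S" "v = (\<lambda>z. \<Sum>i<n2. c2 i * w2 i z)" by blast
  define c where "c i = (if i < n1 then a * c1 i else b * c2 (i - n1))" for i
  define w where "w i = (if i < n1 then w1 i else w2 (i - n1))" for i
  have "\<forall>i<n1+n2. w i \<in> S" using 1 2 by (auto simp: w_def)
  moreover have "(\<lambda>z. a * u z + b * v z) = (\<lambda>z. \<Sum>i<n1+n2. c i * w i z)"
  proof
    fix z
    have s: "(\<Sum>i<n1+n2. f i) = (\<Sum>i<n1. f i) + (\<Sum>i<n2. f (n1 + i))" for f :: "nat \<Rightarrow> rat"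
      by (induction n2) auto
    show "a * u z + b * v z = (\<Sum>i<n1+n2. c i * w i z)"
      unfolding s 1 2 by (simp add: c_def w_def sum_distrib_left mult.assoc)
  qed
  ultimately show ?thesis unfolding lspan_def by blast
qed

lemma lspan_eq: "u \<in> lspan S \<Longrightarrow> v = u \<Longrightarrow> v \<in> lspan S" by simp

lemma lspan_sum:
  assumes "finite I" "\<forall>i\<in>I. w i \<in> lspan S"
  shows "(\<lambda>z. \<Sum>i\<in>I. c i * w i z) \<in> lspan S"
  using assms
proof (induction I rule: finite_induct)
  case empty then show ?case using lspan_zero by simp
next
  case (insert x F)
  then have "(\<lambda>z. 1 * w x z * c x + c x * (\<Sum>i\<in>F. c i * w i z) * 0 + 1 * (\<Sum>i\<in>F. c i * w i z)) \<in> lspan S \<or> True" by simp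
  have "(\<lambda>z. c x * w x z + 1 * (\<Sum>i\<in>F. c i * w i z)) \<in> lspan S"
    using insert by (intro lspan_add) auto
  then show ?case using insert by simp
qed

definition Phi :: "(mat \<Rightarrow> rat) \<Rightarrow> (mat \<Rightarrow> rat)" where
  "Phi x = (\<lambda>Q. \<Sum>M\<in>supp x. if pack M = Q then x M else 0)"

lemma Phi_super: "finite F \<Longrightarrow> supp x \<subseteq> F \<Longrightarrow> Phi x Q = (\<Sum>M\<in>F. if pack M = Q then x M else 0)"
  unfolding Phi_def by (rule sum_supp_super) auto

definition lin :: "'t set \<Rightarrow> ('t \<Rightarrow> rat) \<Rightarrow> ('t \<Rightarrow> 'b) \<Rightarrow> ('b \<Rightarrow> rat)" where
  "lin T c g = (\<lambda>N. \<Sum>t\<in>T. c t * delta (g t) N)"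

lemma supp_lin: "supp (lin T c g) \<subseteq> g ` T"
proof
  fix N assume "N \<in> supp (lin T c g)"
  then have "(\<Sum>t\<in>T. c t * delta (g t) N) \<noteq> 0" by (simp add: supp_def lin_def)
  then obtain t where "t \<in> T" "c t * delta (g t) N \<noteq> 0" using sum_nz by blast
  moreover have "N = g t"
  proof (rule ccontr)
    assume "N \<noteq> g t" then have "delta (g t) N = 0" by (simp add: delta_def)
    then show False using \<open>c t * delta (g t) N \<noteq> 0\<close> by simp
  qed
  ultimately show "N \<in> g ` T" by blast
qed

lemma fin_lin: "finite T \<Longrightarrow> fin (lin T c g)"
  unfolding fin_def by (rule finite_subset[OF supp_lin]) simp

lemma sum_delta_eq: "finite F \<Longrightarrow> (\<Sum>M\<in>F. h M * delta a M) = (if a \<in> F then h a else 0)"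
  by (simp add: delta_def if_distrib[of "\<lambda>z. _ * z"] sum.delta cong: if_cong)

lemma sum_pick: assumes "finite F" "a \<in> F"
  shows "(\<Sum>M\<in>F. if pack M = Q then c * delta a M else 0) = (if pack a = Q then c else 0)"
proof -
  have "(\<Sum>M\<in>F. if pack M = Q then c * delta a M else 0) = (\<Sum>M\<in>F. if a = M then (if pack a = Q then c else 0) else 0)"
    by (intro sum.cong refl) (simp add: delta_def)
  also have "\<dots> = (if pack a = Q then c else 0)" using assms by simp
  finally show ?thesis .
qed

lemma Phi_lin: assumes "finite T" shows "Phi (lin T c g) = lin T c (\<lambda>t. pack (g t))"
proof
  fix Q
  have "Phi (lin T c g) Q = (\<Sum>M\<in>g ` T. if pack M = Q then lin T c g M else 0)"
    by (rule Phi_super[OF _ supp_lin]) (simp add: assms)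
  also have "\<dots> = (\<Sum>M\<in>g ` T. \<Sum>t\<in>T. if pack M = Q then c t * delta (g t) M else 0)"
    by (intro sum.cong refl) (simp add: lin_def)
  also have "\<dots> = (\<Sum>t\<in>T. \<Sum>M\<in>g ` T. if pack M = Q then c t * delta (g t) M else 0)"
    by (rule sum.swap)
  also have "\<dots> = (\<Sum>t\<in>T. if pack (g t) = Q then c t else 0)"
    using assms by (intro sum.cong refl sum_pick) auto
  also have "\<dots> = (\<Sum>t\<in>T. c t * delta (pack (g t)) Q)"
    by (intro sum.cong refl) (simp add: delta_def)
  finally show "Phi (lin T c g) Q = lin T c (\<lambda>t. pack (g t)) Q" by (simp add: lin_def)
qed

lemma sum_delta2: "finite F \<Longrightarrow> (\<Sum>t\<in>F. h t * delta t N) = (if N \<in> F then h N else 0)"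
proof -
  assume f: "finite F"
  have "(\<Sum>t\<in>F. h t * delta t N) = (\<Sum>t\<in>F. if t = N then h t else 0)"
    by (intro sum.cong) (auto simp: delta_def)
  then show ?thesis using f by (simp add: sum.delta)
qed

lemma x_lin: "fin x \<Longrightarrow> x = lin (supp x) x id"
proof
  fix N assume f: "fin x"
  show "x N = lin (supp x) x id N"
    using f sum_delta2[of "supp x" x N] by (auto simp: lin_def fin_def supp_def)
qed

lemma Phi_x: "Phi x = lin (supp x) x pack"
  by (auto simp: Phi_def lin_def delta_def intro!: sum.cong)

lemma fin_sum:
  assumes "finite I" "\<forall>i\<in>I. fin (w i)"
  shows "fin (\<lambda>N. \<Sum>i\<in>I. c i * w i N)"
proof -
  have "supp (\<lambda>N. \<Sum>i\<in>I. c i * w i N) \<subseteq> (\<Union>i\<in>I. supp (w i))"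
  proof
    fix N assume "N \<in> supp (\<lambda>N. \<Sum>i\<in>I. c i * w i N)"
    then have "(\<Sum>i\<in>I. c i * w i N) \<noteq> 0" by (simp add: supp_def)
    then obtain i where "i \<in> I" "c i * w i N \<noteq> 0" using sum_nz by blast
    then show "N \<in> (\<Union>i\<in>I. supp (w i))" by (auto simp: supp_def)
  qed
  then show ?thesis using assms by (auto simp: fin_def intro: finite_subset)
qed

lemma Phi_sum:
  assumes "finite I" "\<forall>i\<in>I. fin (w i)"
  shows "Phi (\<lambda>N. \<Sum>i\<in>I. c i * w i N) = (\<lambda>Q. \<Sum>i\<in>I. c i * Phi (w i) Q)"
proof
  fix Q
  define F where "F = (\<Union>i\<in>I. supp (w i))"
  have fF: "finite F" using assms by (auto simp: F_def fin_def)
  have sF: "supp (\<lambda>N. \<Sum>i\<in>I. c i * w i N) \<subseteq> F"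
  proof
    fix N assume "N \<in> supp (\<lambda>N. \<Sum>i\<in>I. c i * w i N)"
    then have "(\<Sum>i\<in>I. c i * w i N) \<noteq> 0" by (simp add: supp_def)
    then obtain i where "i \<in> I" "c i * w i N \<noteq> 0" using sum_nz by blast
    then show "N \<in> F" by (auto simp: supp_def F_def)
  qed
  have "Phi (\<lambda>N. \<Sum>i\<in>I. c i * w i N) Q = (\<Sum>M\<in>F. if pack M = Q then (\<Sum>i\<in>I. c i * w i M) else 0)"
    using Phi_super[OF fF sF] by simp
  also have "\<dots> = (\<Sum>M\<in>F. \<Sum>i\<in>I. c i * (if pack M = Q then w i M else 0))"
    by (intro sum.cong) (auto simp: sum.neutral)
  also have "\<dots> = (\<Sum>i\<in>I. c i * (\<Sum>M\<in>F. if pack M = Q then w i M else 0))"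
    by (subst sum.swap) (simp add: sum_distrib_left)
  also have "\<dots> = (\<Sum>i\<in>I. c i * Phi (w i) Q)"
  proof (intro sum.cong refl)
    fix i assume "i \<in> I"
    then have "supp (w i) \<subseteq> F" by (auto simp: F_def)
    then show "c i * (\<Sum>M\<in>F. if pack M = Q then w i M else 0) = c i * Phi (w i) Q"
      using Phi_super[OF fF] by simp
  qed
  finally show "Phi (\<lambda>N. \<Sum>i\<in>I. c i * w i N) Q = (\<Sum>i\<in>I. c i * Phi (w i) Q)" .
qed

lemma Phi_gen: "Phi (\<lambda>N. delta M N - delta (pack M) N) = (\<lambda>_. 0)"
proof
  fix Q
  have "Phi (\<lambda>N. delta M N - delta (pack M) N) Q =
        (\<Sum>X\<in>{M, pack M}. if pack X = Q then delta M X - delta (pack M) X else 0)"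
    by (rule Phi_super) (auto simp: supp_def delta_def)
  also have "\<dots> = 0"
  proof (cases "pack M = M")
    case True
    show ?thesis using True by (intro sum.neutral) (auto simp: delta_def)
  qed (simp add: delta_def)
  finally show "Phi (\<lambda>N. delta M N - delta (pack M) N) Q = 0" .
qed

lemma fin_gen: "fin (\<lambda>N. delta M N - delta (pack M) N)"
proof -
  have "supp (\<lambda>N. delta M N - delta (pack M) N) \<subseteq> {M, pack M}" by (auto simp: supp_def delta_def)
  then show ?thesis by (auto simp: fin_def intro: finite_subset)
qed

lemma Iid_char: "y \<in> Iid \<longleftrightarrow> fin y \<and> Phi y = (\<lambda>_. 0)"
proof
  assume "y \<in> Iid"
  then have "\<exists>(n::nat) c w. (\<forall>i<n. w i \<in> {(\<lambda>N. delta M N - delta (pack M) N) | M. True}) \<and> y = (\<lambda>z. \<Sum>i<n. c i * w i z)"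
    by (simp add: Iid_def lspan_def)
  then obtain n :: nat and c w where w: "\<forall>i<n. w i \<in> {(\<lambda>N. delta M N - delta (pack M) N) | M. True}"
    and y: "y = (\<lambda>z. \<Sum>i<n. c i * w i z)" by blast
  have fw: "\<forall>i\<in>{..<n}. fin (w i)" using w fin_gen by auto
  have "fin y" unfolding y by (rule fin_sum) (use fw in auto)
  moreover have "Phi y = (\<lambda>_. 0)"
  proof -
    have "Phi y = (\<lambda>Q. \<Sum>i<n. c i * Phi (w i) Q)" unfolding y by (rule Phi_sum) (use fw in auto)
    also have "\<dots> = (\<lambda>_. 0)" using w Phi_gen by (auto intro!: ext sum.neutral)
    finally show ?thesis .
  qed
  ultimately show "fin y \<and> Phi y = (\<lambda>_. 0)" by simp
next
  assume a: "fin y \<and> Phi y = (\<lambda>_. 0)"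
  have "y = (\<lambda>z. \<Sum>M\<in>supp y. y M * (delta M z - delta (pack M) z))"
  proof
    fix z
    have "(\<Sum>M\<in>supp y. y M * (delta M z - delta (pack M) z)) = lin (supp y) y id z - lin (supp y) y pack z"
      by (simp add: lin_def algebra_simps sum_subtractf delta_def)
    also have "\<dots> = y z - Phi y z"
    proof -
      have "lin (supp y) y id z = y z" using x_lin[of y] a by simp
      moreover have "lin (supp y) y pack z = Phi y z" using Phi_x[of y] by simp
      ultimately show ?thesis by simp
    qed
    also have "\<dots> = y z" using a by simp
    finally show "y z = (\<Sum>M\<in>supp y. y M * (delta M z - delta (pack M) z))" by simp
  qed
  also have "\<dots> \<in> Iid" unfolding Iid_def
    by (rule lspan_sum) (use a in \<open>auto simp: fin_def intro: lspan_gen\<close>)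
  finally show "y \<in> Iid" .
qed

lemma Jid_genI: "a \<in> Iid \<Longrightarrow> fin b \<Longrightarrow> tens a b \<in> Jid"
  unfolding Jid_def by (rule lspan_gen) blast
lemma Jid_genI2: "fin a \<Longrightarrow> b \<in> Iid \<Longrightarrow> tens a b \<in> Jid"
  unfolding Jid_def by (rule lspan_gen) blast

lemma Iid_gen: "(\<lambda>N. delta A N - delta (pack A) N) \<in> Iid"
  unfolding Iid_char using Phi_gen fin_gen by simp

lemma Jid_gen: "(\<lambda>AB. delta (A,B) AB - delta (pack A, pack B) AB) \<in> Jid"
proof -
  have g1: "tens (\<lambda>N. delta A N - delta (pack A) N) (delta B) \<in> Jid"
    by (rule Jid_genI[OF Iid_gen fin_delta])
  have g2: "tens (delta (pack A)) (\<lambda>N. delta B N - delta (pack B) N) \<in> Jid"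
    by (rule Jid_genI2[OF fin_delta Iid_gen])
  have "(\<lambda>z. 1 * tens (\<lambda>N. delta A N - delta (pack A) N) (delta B) z + 1 * tens (delta (pack A)) (\<lambda>N. delta B N - delta (pack B) N) z) \<in> Jid"
    using g1 g2 unfolding Jid_def by (rule lspan_add)
  moreover have "(\<lambda>z. 1 * tens (\<lambda>N. delta A N - delta (pack A) N) (delta B) z + 1 * tens (delta (pack A)) (\<lambda>N. delta B N - delta (pack B) N) z)
     = (\<lambda>AB. delta (A,B) AB - delta (pack A, pack B) AB)"
  proof
    fix z :: "mat \<times> mat"
    obtain X Y where z: "z = (X,Y)" by (cases z)
    show "1 * tens (\<lambda>N. delta A N - delta (pack A) N) (delta B) z + 1 * tens (delta (pack A)) (\<lambda>N. delta B N - delta (pack B) N) z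
        = delta (A,B) z - delta (pack A, pack B) z"
      unfolding z tens_def delta_def by (simp add: algebra_simps)
  qed
  ultimately show ?thesis by simp
qed


lemma group_pack: assumes "fin y"
  shows "(\<Sum>M\<in>supp y. y M * h (pack M)) = (\<Sum>P\<in>pack ` supp y. Phi y P * h P)"
proof -
  have f: "finite (supp y)" using assms by (simp add: fin_def)
  have "(\<Sum>M\<in>supp y. y M * h (pack M)) = (\<Sum>P\<in>pack ` supp y. \<Sum>M\<in>{M \<in> supp y. pack M = P}. y M * h (pack M))"
    by (rule sum.image_gen[OF f])
  also have "\<dots> = (\<Sum>P\<in>pack ` supp y. Phi y P * h P)"
  proof (intro sum.cong refl)
    fix P
    have "(\<Sum>M\<in>{M \<in> supp y. pack M = P}. y M * h (pack M)) = (\<Sum>M\<in>{M \<in> supp y. pack M = P}. y M) * h P"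
      by (simp add: sum_distrib_right)
    also have "(\<Sum>M\<in>{M \<in> supp y. pack M = P}. y M) = Phi y P"
      unfolding Phi_def using f by (simp add: sum.inter_filter)
    finally show "(\<Sum>M\<in>{M \<in> supp y. pack M = P}. y M * h (pack M)) = Phi y P * h P" .
  qed
  finally show ?thesis .
qed

lemma group_zero: "y \<in> Iid \<Longrightarrow> (\<Sum>M\<in>supp y. y M * h (pack M)) = 0"
  using group_pack[of y h] by (simp add: Iid_char)

lemma sum_pickP: assumes "finite F" "a \<in> F"
  shows "(\<Sum>M\<in>F. if P M then c * delta a M else 0) = (if P a then c else 0)"
proof -
  have "(\<Sum>M\<in>F. if P M then c * delta a M else 0) = (\<Sum>M\<in>F. if a = M then (if P a then c else 0) else 0)"
    by (intro sum.cong refl) (simp add: delta_def)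
  also have "\<dots> = (if P a then c else 0)" using assms by simp
  finally show ?thesis .
qed

lemma mult_lin: "mult x y = lin (supp x \<times> supp y) (\<lambda>(M,M'). x M * y M') (\<lambda>(M,M'). blockdiag M M')"
proof
  fix N
  have "mult x y N = (\<Sum>(M,M')\<in>supp x \<times> supp y. if blockdiag M M' = N then x M * y M' else 0)"
    by (simp add: mult_def sum.cartesian_product)
  also have "\<dots> = lin (supp x \<times> supp y) (\<lambda>(M,M'). x M * y M') (\<lambda>(M,M'). blockdiag M M') N"
    unfolding lin_def by (intro sum.cong refl) (auto simp: delta_def)
  finally show "mult x y N = lin (supp x \<times> supp y) (\<lambda>(M,M'). x M * y M') (\<lambda>(M,M'). blockdiag M M') N" .
qed

lemma fin_mult: "fin x \<Longrightarrow> fin y \<Longrightarrow> fin (mult x y)"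
  unfolding mult_lin by (rule fin_lin) (simp add: fin_def)

lemma ideal_right: assumes x: "fin x" and y: "y \<in> Iid" shows "mult x y \<in> Iid"
proof -
  have fy: "fin y" using y by (simp add: Iid_char)
  have fT: "finite (supp x \<times> supp y)" using x fy by (simp add: fin_def)
  have "Phi (mult x y) = (\<lambda>_. 0)"
  proof
    fix Q
    have "Phi (mult x y) Q = lin (supp x \<times> supp y) (\<lambda>(M,M'). x M * y M') (\<lambda>t. pack ((\<lambda>(M,M'). blockdiag M M') t)) Q"
      unfolding mult_lin Phi_lin[OF fT] by simp
    also have "\<dots> = (\<Sum>(M,M')\<in>supp x \<times> supp y. x M * (y M' * delta (blockdiag (pack M) (pack M')) Q))"
      unfolding lin_def by (intro sum.cong refl) (auto simp: pack_bd split: prod.splits)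
    also have "\<dots> = (\<Sum>M\<in>supp x. \<Sum>M'\<in>supp y. x M * (y M' * delta (blockdiag (pack M) (pack M')) Q))"
      by (rule sum.cartesian_product[symmetric])
    also have "\<dots> = (\<Sum>M\<in>supp x. x M * (\<Sum>M'\<in>supp y. y M' * delta (blockdiag (pack M) (pack M')) Q))"
      by (simp add: sum_distrib_left)
    also have "\<dots> = 0"
    proof (intro sum.neutral ballI)
      fix M show "x M * (\<Sum>M'\<in>supp y. y M' * delta (blockdiag (pack M) (pack M')) Q) = 0"
        using group_zero[OF y, of "\<lambda>P. delta (blockdiag (pack M) P) Q"] by simp
    qed
    finally show "Phi (mult x y) Q = 0" .
  qed
  then show ?thesis using fin_mult[OF x fy] by (simp add: Iid_char)
qed

lemma ideal_left: assumes x: "fin x" and y: "y \<in> Iid" shows "mult y x \<in> Iid"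
proof -
  have fy: "fin y" using y by (simp add: Iid_char)
  have fT: "finite (supp y \<times> supp x)" using x fy by (simp add: fin_def)
  have "Phi (mult y x) = (\<lambda>_. 0)"
  proof
    fix Q
    have "Phi (mult y x) Q = lin (supp y \<times> supp x) (\<lambda>(M,M'). y M * x M') (\<lambda>t. pack ((\<lambda>(M,M'). blockdiag M M') t)) Q"
      unfolding mult_lin Phi_lin[OF fT] by simp
    also have "\<dots> = (\<Sum>(M,M')\<in>supp y \<times> supp x. x M' * (y M * delta (blockdiag (pack M) (pack M')) Q))"
      unfolding lin_def by (intro sum.cong refl) (auto simp: pack_bd split: prod.splits)
    also have "\<dots> = (\<Sum>M\<in>supp y. \<Sum>M'\<in>supp x. x M' * (y M * delta (blockdiag (pack M) (pack M')) Q))"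
      by (rule sum.cartesian_product[symmetric])
    also have "\<dots> = (\<Sum>M'\<in>supp x. \<Sum>M\<in>supp y. x M' * (y M * delta (blockdiag (pack M) (pack M')) Q))"
      by (rule sum.swap)
    also have "\<dots> = (\<Sum>M'\<in>supp x. x M' * (\<Sum>M\<in>supp y. y M * delta (blockdiag (pack M) (pack M')) Q))"
      by (simp add: sum_distrib_left)
    also have "\<dots> = 0"
    proof (intro sum.neutral ballI)
      fix M' show "x M' * (\<Sum>M\<in>supp y. y M * delta (blockdiag (pack M) (pack M')) Q) = 0"
        using group_zero[OF y, of "\<lambda>P. delta (blockdiag P (pack M')) Q"] by simp
    qed
    finally show "Phi (mult y x) Q = 0" .
  qed
  then show ?thesis using fin_mult[OF fy x] by (simp add: Iid_char)
qed

lemma mult_delta: "mult (delta P) (delta Q) = delta (blockdiag P Q)"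
proof
  fix N show "mult (delta P) (delta Q) N = delta (blockdiag P Q) N"
    unfolding mult_def supp_delta by (simp add: delta_def)
qed

lemma homog_mult: assumes "homog m x" "homog n y" shows "homog (m + n) (mult x y)"
  unfolding homog_def
proof (intro allI impI)
  fix N assume "mult x y N \<noteq> 0"
  then have "N \<in> supp (mult x y)" by (simp add: supp_def)
  then have "N \<in> (\<lambda>(M,M'). blockdiag M M') ` (supp x \<times> supp y)" using supp_lin mult_lin by (metis subsetD)
  then obtain M M' where "M \<in> supp x" "M' \<in> supp y" "N = blockdiag M M'" by auto
  then show "weight N = m + n" using assms by (auto simp: homog_def supp_def weight_bd)
qed

lemma cop_delta: "cop (delta M) = (\<lambda>AB. if AB \<in> dec M then 1 else 0)"
  by (auto simp: cop_def dec_def delta_def)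

lemma cop_sum: "cop (\<lambda>z. \<Sum>i\<in>I. c i * w i z) = (\<lambda>AB. \<Sum>i\<in>I. c i * cop (w i) AB)"
  by (auto simp: cop_def)

definition pp :: "mat \<times> mat \<Rightarrow> mat \<times> mat" where "pp t = (pack (fst t), pack (snd t))"

lemma Jid_dec: "finite F \<Longrightarrow> (\<lambda>AB. \<Sum>t\<in>F. 1 * (delta t AB - delta (pp t) AB)) \<in> Jid"
proof -
  assume f: "finite F"
  have "\<forall>t\<in>F. (\<lambda>AB. delta t AB - delta (pp t) AB) \<in> Jid"
  proof
    fix t :: "mat \<times> mat" obtain A B where "t = (A,B)" by (cases t)
    then show "(\<lambda>AB. delta t AB - delta (pp t) AB) \<in> Jid" using Jid_gen by (simp add: pp_def)
  qed
  then show ?thesis unfolding Jid_def using f by (intro lspan_sum) (auto simp: Jid_def)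
qed

lemma sum_pp_dec: "(\<Sum>t\<in>dec (pack M). delta (pp t) AB) = (\<Sum>t\<in>dec M. delta (pp t) AB)"
proof -
  have "(\<Sum>t\<in>dec (pack M). delta (pp t) AB) = (\<Sum>t\<in>dec M. delta (pp ((\<lambda>(A,B). (rM M A, rM M B)) t)) AB)"
    using sum.reindex_bij_betw[OF bij_dec[of M], of "\<lambda>t. delta (pp t) AB"] by simp
  also have "\<dots> = (\<Sum>t\<in>dec M. delta (pp t) AB)"
  proof (intro sum.cong refl)
    fix t assume t: "t \<in> dec M"
    obtain A B where ab: "t = (A,B)" by (cases t)
    then have "le A M" "le B M" using dec_le t by auto
    then show "delta (pp ((\<lambda>(A,B). (rM M A, rM M B)) t)) AB = delta (pp t) AB"
      using ab by (simp add: pp_def pack_rM)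
  qed
  finally show ?thesis .
qed

lemma cop_gen: "cop (\<lambda>N. delta (M::mat) N - delta (pack M) N) \<in> Jid"
proof -
  have e: "cop (\<lambda>N. delta M N - delta (pack M) N) =
    (\<lambda>AB. 1 * (\<Sum>t\<in>dec M. 1 * (delta t AB - delta (pp t) AB)) + (-1) * (\<Sum>t\<in>dec (pack M). 1 * (delta t AB - delta (pp t) AB)))"
  proof
    fix AB
    have a: "(\<Sum>t\<in>dec M. delta t AB) = (if AB \<in> dec M then 1 else 0)"
      using finite_dec sum_delta2[where F="dec M" and h="\<lambda>_. 1" and N=AB] by simp
    have b: "(\<Sum>t\<in>dec (pack M). delta t AB) = (if AB \<in> dec (pack M) then 1 else 0)"
      using finite_dec sum_delta2[where F="dec (pack M)" and h="\<lambda>_. 1" and N=AB] by simp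
    have "cop (\<lambda>N. delta M N - delta (pack M) N) AB = (if AB \<in> dec M then 1 else 0) - (if AB \<in> dec (pack M) then 1 else 0)"
      by (cases AB) (simp add: cop_def dec_def delta_def)
    also have "\<dots> = (\<Sum>t\<in>dec M. delta t AB) - (\<Sum>t\<in>dec M. delta (pp t) AB) - ((\<Sum>t\<in>dec (pack M). delta t AB) - (\<Sum>t\<in>dec (pack M). delta (pp t) AB))"
      using a b sum_pp_dec[where M=M and AB=AB] by simp
    finally show "cop (\<lambda>N. delta M N - delta (pack M) N) AB =
      1 * (\<Sum>t\<in>dec M. 1 * (delta t AB - delta (pp t) AB)) + (-1) * (\<Sum>t\<in>dec (pack M). 1 * (delta t AB - delta (pp t) AB))"
      by (simp add: sum_subtractf)
  qed
  show ?thesis unfolding e Jid_def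
    by (rule lspan_add) (use Jid_dec[OF finite_dec] in \<open>simp_all add: Jid_def\<close>)
qed

lemma cop_Iid: assumes "x \<in> Iid" shows "cop x \<in> Jid"
proof -
  have "\<exists>(n::nat) c w. (\<forall>i<n. w i \<in> {(\<lambda>N. delta M N - delta (pack M) N) | M. True}) \<and> x = (\<lambda>z. \<Sum>i<n. c i * w i z)"
    using assms by (simp add: Iid_def lspan_def)
  then obtain n :: nat and c w where w: "\<forall>i<n. w i \<in> {(\<lambda>N. delta M N - delta (pack M) N) | M. True}"
    and x: "x = (\<lambda>z. \<Sum>i<n. c i * w i z)" by blast
  have "\<forall>i\<in>{..<n}. cop (w i) \<in> Jid" using w cop_gen by auto
  then have "(\<lambda>AB. \<Sum>i\<in>{..<n}. c i * cop (w i) AB) \<in> Jid" unfolding Jid_def by (intro lspan_sum) (auto simp: Jid_def)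
  then show ?thesis unfolding x cop_sum by simp
qed

lemma dec'_eq: "{(A, B). same_shape A B \<and> same_shape A P \<and> madd A B = P} = dec P"
proof -
  have "same_shape A B \<Longrightarrow> madd A B = P \<Longrightarrow> same_shape A P" for A B
    using madd_parts[of A B] by (auto simp: same_shape_def)
  then show ?thesis by (auto simp: dec_def)
qed

lemma cop_packed:
  "(\<lambda>AB. cop (delta P) AB
              - (\<Sum>(A, B)\<in>{(A, B). same_shape A B \<and> same_shape A P \<and> madd A B = P}.
                    tens (delta (pack A)) (delta (pack B)) AB)) \<in> Jid"
proof -
  have "(\<lambda>AB. cop (delta P) AB
              - (\<Sum>(A, B)\<in>{(A, B). same_shape A B \<and> same_shape A P \<and> madd A B = P}.
                    tens (delta (pack A)) (delta (pack B)) AB)) = (\<lambda>AB. \<Sum>t\<in>dec P. 1 * (delta t AB - delta (pp t) AB))"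
  proof
    fix AB
    have a: "(\<Sum>t\<in>dec P. delta t AB) = (if AB \<in> dec P then 1 else 0)"
      using finite_dec sum_delta2[where F="dec P" and h="\<lambda>_. 1" and N=AB] by simp
    have b: "(\<Sum>(A, B)\<in>dec P. tens (delta (pack A)) (delta (pack B)) AB) = (\<Sum>t\<in>dec P. delta (pp t) AB)"
      by (intro sum.cong refl) (auto simp: tens_def delta_def pp_def split: prod.splits)
    show "cop (delta P) AB - (\<Sum>(A, B)\<in>{(A, B). same_shape A B \<and> same_shape A P \<and> madd A B = P}.
                    tens (delta (pack A)) (delta (pack B)) AB) = (\<Sum>t\<in>dec P. 1 * (delta t AB - delta (pp t) AB))"
      unfolding dec'_eq b using a by (simp add: cop_delta sum_subtractf)
  qed
  then show ?thesis using Jid_dec[OF finite_dec] by simp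
qed

lemma weight_madd: "same_shape A B \<Longrightarrow> weight (madd A B) = weight A + weight B"
proof -
  assume s: "same_shape A B"
  then have "(A,B) \<in> dec (madd A B)" by (simp add: dec_def)
  then have "[A,B] \<in> LS (madd A B)" using dec_LS by blast
  then show ?thesis using weight_LS by fastforce
qed

lemma homog_cop: "homog n x \<Longrightarrow> cop x (A, B) \<noteq> 0 \<Longrightarrow> weight A + weight B = n"
  by (auto simp: cop_def homog_def weight_madd split: if_splits)

lemma counit_Iid: "x \<in> Iid \<Longrightarrow> counit x = 0"
proof -
  assume x: "x \<in> Iid"
  have "counit x = (\<Sum>M\<in>supp x. x M * (\<lambda>P. if weight P = 0 then 1 else 0) (pack M))"
    unfolding counit_def by (intro sum.cong refl) simp
  also have "\<dots> = 0" by (rule group_zero[OF x])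
  finally show ?thesis .
qed

lemma counit_homog: "homog n x \<Longrightarrow> 0 < n \<Longrightarrow> counit x = 0"
  unfolding counit_def homog_def by (intro sum.neutral) (auto simp: supp_def)

lemma Phi_diff: assumes "fin x" "fin y" shows "Phi (\<lambda>N. x N - y N) = (\<lambda>Q. Phi x Q - Phi y Q)"
proof -
  define w where "w i = (if i = (0::nat) then x else y)" for i
  define c where "c i = (if i = (0::nat) then 1 else -1 :: rat)" for i
  have e: "(\<lambda>N. x N - y N) = (\<lambda>N. \<Sum>i\<in>{0,1}. c i * w i N)" by (simp add: c_def w_def)
  have "Phi (\<lambda>N. \<Sum>i\<in>{0,1}. c i * w i N) = (\<lambda>Q. \<Sum>i\<in>{0,1}. c i * Phi (w i) Q)"
    by (rule Phi_sum) (use assms in \<open>auto simp: w_def\<close>)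
  then show ?thesis unfolding e by (simp add: c_def w_def)
qed

lemma fin_diff: "fin x \<Longrightarrow> fin y \<Longrightarrow> fin (\<lambda>N. x N - y N)"
proof -
  assume "fin x" "fin y"
  moreover have "supp (\<lambda>N. x N - y N) \<subseteq> supp x \<union> supp y" by (auto simp: supp_def)
  ultimately show ?thesis by (auto simp: fin_def intro: finite_subset)
qed

lemma fin_scale: "fin x \<Longrightarrow> fin (\<lambda>N. c * x N)"
proof -
  assume "fin x"
  moreover have "supp (\<lambda>N. c * x N) \<subseteq> supp x" by (auto simp: supp_def)
  ultimately show ?thesis by (auto simp: fin_def intro: finite_subset)
qed

lemma Phi_scale_delta: "Phi (\<lambda>N. c * delta M N) = (\<lambda>Q. c * delta (pack M) Q)"
proof
  fix Q
  have "Phi (\<lambda>N. c * delta M N) Q = (\<Sum>X\<in>{M}. if pack X = Q then c * delta M X else 0)"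
    by (rule Phi_super) (auto simp: supp_def delta_def)
  then show "Phi (\<lambda>N. c * delta M N) Q = c * delta (pack M) Q" by (simp add: delta_def)
qed

lemma connected: assumes f: "fin x" and h: "homog 0 x"
  shows "\<exists>c. (\<lambda>N. x N - c * delta emptyM N) \<in> Iid"
proof -
  define c where "c = (\<Sum>M\<in>supp x. x M)"
  have fd: "fin (\<lambda>N. c * delta emptyM N)" by (rule fin_scale) simp
  have "Phi x = (\<lambda>Q. c * delta emptyM Q)"
  proof
    fix Q
    have "Phi x Q = (\<Sum>M\<in>supp x. if emptyM = Q then x M else 0)"
      unfolding Phi_def using h pack_zero by (intro sum.cong refl) (auto simp: homog_def supp_def)
    then show "Phi x Q = c * delta emptyM Q" by (simp add: c_def delta_def)
  qed
  then have "Phi (\<lambda>N. x N - c * delta emptyM N) = (\<lambda>_. 0)"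
    using Phi_diff[OF f fd] Phi_scale_delta[of c emptyM] by simp
  then show ?thesis using fin_diff[OF f fd] by (auto simp: Iid_char)
qed

lemma Phi_packed: assumes "fin y" "\<forall>M. y M \<noteq> 0 \<longrightarrow> packed M" shows "Phi y = y"
proof
  fix Q
  have "Phi y Q = (\<Sum>M\<in>supp y. if M = Q then y M else 0)"
    unfolding Phi_def using assms(2) pack_packed by (intro sum.cong refl) (auto simp: supp_def)
  also have "\<dots> = y Q" using assms(1) by (simp add: fin_def supp_def)
  finally show "Phi y Q = y Q" .
qed

lemma Phi_fin: "fin x \<Longrightarrow> fin (Phi x)"
  unfolding Phi_x by (rule fin_lin) (simp add: fin_def)

lemma Phi_supp_packed: "Phi x M \<noteq> 0 \<Longrightarrow> packed M"
proof -
  assume "Phi x M \<noteq> 0"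
  then have "M \<in> supp (lin (supp x) x pack)" by (simp add: supp_def Phi_x)
  then have "M \<in> pack ` supp x" using supp_lin[of "supp x" x pack] by (rule subsetD[rotated])
  then show "packed M" using packed_pack by auto
qed

lemma basis1: "fin x \<Longrightarrow> \<exists>y. fin y \<and> (\<forall>M. y M \<noteq> 0 \<longrightarrow> packed M) \<and> (\<lambda>N. x N - y N) \<in> Iid"
proof -
  assume f: "fin x"
  have fp: "fin (Phi x)" by (rule Phi_fin[OF f])
  have pk: "\<forall>M. Phi x M \<noteq> 0 \<longrightarrow> packed M" using Phi_supp_packed by blast
  have "Phi (\<lambda>N. x N - Phi x N) = (\<lambda>_. 0)"
    using Phi_diff[OF f fp] Phi_packed[OF fp pk] by simp
  then show ?thesis using fp pk fin_diff[OF f fp] by (auto simp: Iid_char)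
qed

lemma basis2: "fin y \<Longrightarrow> (\<forall>M. y M \<noteq> 0 \<longrightarrow> packed M) \<Longrightarrow> y \<in> Iid \<Longrightarrow> y = (\<lambda>_. 0)"
proof -
  assume f: "fin y" and p: "\<forall>M. y M \<noteq> 0 \<longrightarrow> packed M" and i: "y \<in> Iid"
  have "Phi y = (\<lambda>_. 0)" using i by (simp add: Iid_char)
  then show ?thesis using Phi_packed[OF f p] by simp
qed

lemma hpart_Iid: assumes x: "x \<in> Iid" shows "hpart n x \<in> Iid"
proof -
  have f: "fin x" using x by (simp add: Iid_char)
  have s: "supp (hpart n x) \<subseteq> supp x" by (auto simp: supp_def hpart_def)
  then have fh: "fin (hpart n x)" using f by (auto simp: fin_def intro: finite_subset)
  have "Phi (hpart n x) = (\<lambda>_. 0)"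
  proof
    fix Q
    have "Phi (hpart n x) Q = (\<Sum>M\<in>supp x. if pack M = Q then hpart n x M else 0)"
      using f s by (intro Phi_super) (auto simp: fin_def)
    also have "\<dots> = (\<Sum>M\<in>supp x. (if weight Q = n then 1 else 0) * (if pack M = Q then x M else 0))"
      by (intro sum.cong refl) (auto simp: hpart_def)
    also have "\<dots> = (if weight Q = n then 1 else 0) * Phi x Q"
      by (simp add: Phi_def sum_distrib_left)
    also have "\<dots> = 0" using x by (simp add: Iid_char)
    finally show "Phi (hpart n x) Q = 0" .
  qed
  then show ?thesis using fh by (simp add: Iid_char)
qed


lemma delta_same[simp]: "delta M M = 1" by (simp add: delta_def)

definition bdl :: "mat list \<Rightarrow> mat" where "bdl xs = foldr blockdiag xs emptyM"

lemma bdl_Nil[simp]: "bdl [] = emptyM" by (simp add: bdl_def)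
lemma bdl_Cons[simp]: "bdl (A # xs) = blockdiag A (bdl xs)" by (simp add: bdl_def)
lemma bdl_snoc: "bdl (xs @ [B]) = blockdiag (bdl xs) B"
  by (induction xs) (simp_all add: bd_assoc)
lemma pack_bdl: "pack (bdl xs) = bdl (map pack xs)"
  by (induction xs) (simp_all add: pack_bd)

definition sg :: "mat list \<Rightarrow> rat" where "sg xs = (-1) ^ length xs"

lemma sg_Cons[simp]: "sg (A # xs) = - sg xs" by (simp add: sg_def)
lemma sg_snoc: "sg (xs @ [B]) = - sg xs" by (simp add: sg_def)
lemma sg_Nil[simp]: "sg [] = 1" by (simp add: sg_def)

definition sa :: "mat \<Rightarrow> (mat \<Rightarrow> rat)" where "sa M = lin (D M) sg bdl"

definition Sop :: "(mat \<Rightarrow> rat) \<Rightarrow> (mat \<Rightarrow> rat)" where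
  "Sop x = (\<lambda>N. \<Sum>M\<in>supp x. x M * sa M N)"

lemma fin_sa: "fin (sa M)" unfolding sa_def by (rule fin_lin[OF finite_D])

lemma Sop_super: "finite F \<Longrightarrow> supp x \<subseteq> F \<Longrightarrow> Sop x = (\<lambda>N. \<Sum>M\<in>F. x M * sa M N)"
  unfolding Sop_def by (intro ext sum_supp_super) auto

lemma Sop_delta: "Sop (delta A) = sa A"
  unfolding Sop_def supp_delta by (simp add: delta_def)

lemma fin_Sop: "fin x \<Longrightarrow> fin (Sop x)"
  unfolding Sop_def by (rule fin_sum) (use fin_sa in \<open>auto simp: fin_def[symmetric]\<close>)

lemma linear_Sop: "linear_map Sop"
  unfolding linear_map_def
proof (intro conjI allI impI)
  show "\<And>x. fin x \<Longrightarrow> fin (Sop x)" by (rule fin_Sop)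
  fix a b :: rat and x y :: "mat \<Rightarrow> rat" assume fx: "fin x" and fy: "fin y"
  define F where "F = supp x \<union> supp y"
  have fF: "finite F" using fx fy by (simp add: F_def fin_def)
  have s: "supp (\<lambda>N. a * x N + b * y N) \<subseteq> F" by (auto simp: F_def supp_def)
  have ex: "Sop x = (\<lambda>N. \<Sum>M\<in>F. x M * sa M N)" by (rule Sop_super[OF fF]) (auto simp: F_def)
  have ey: "Sop y = (\<lambda>N. \<Sum>M\<in>F. y M * sa M N)" by (rule Sop_super[OF fF]) (auto simp: F_def)
  show "Sop (\<lambda>N. a * x N + b * y N) = (\<lambda>N. a * Sop x N + b * Sop y N)"
    unfolding Sop_super[OF fF s] ex ey
    by (auto simp: F_def algebra_simps sum.distrib sum_distrib_left)
qed

lemma Phi_sa_pack: "Phi (sa M) = Phi (sa (pack M))"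
proof
  fix Q
  have "Phi (sa (pack M)) Q = (\<Sum>ys\<in>D (pack M). sg ys * delta (pack (bdl ys)) Q)"
    unfolding sa_def Phi_lin[OF finite_D] by (simp add: lin_def)
  also have "\<dots> = (\<Sum>xs\<in>D M. sg (map (rM M) xs) * delta (pack (bdl (map (rM M) xs))) Q)"
    using sum.reindex_bij_betw[OF bij_D[of M], where g="\<lambda>ys. sg ys * delta (pack (bdl ys)) Q"] by simp
  also have "\<dots> = (\<Sum>xs\<in>D M. sg xs * delta (pack (bdl xs)) Q)"
  proof (intro sum.cong refl)
    fix xs assume xs: "xs \<in> D M"
    then have "\<forall>A\<in>set xs. le A M" using LS_le by (auto simp: D_def)
    then have mp: "map (\<lambda>A. pack (rM M A)) xs = map pack xs" using pack_rM by (intro map_cong) auto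
    show "sg (map (rM M) xs) * delta (pack (bdl (map (rM M) xs))) Q = sg xs * delta (pack (bdl xs)) Q"
      using mp by (simp add: sg_def pack_bdl o_def del: map_eq_conv)
  qed
  also have "\<dots> = Phi (sa M) Q"
    unfolding sa_def Phi_lin[OF finite_D] by (simp add: lin_def)
  finally show "Phi (sa M) Q = Phi (sa (pack M)) Q" by simp
qed

lemma Sop_Iid: assumes x: "x \<in> Iid" shows "Sop x \<in> Iid"
proof -
  have f: "fin x" using x by (simp add: Iid_char)
  have "Phi (Sop x) = (\<lambda>Q. \<Sum>M\<in>supp x. x M * Phi (sa M) Q)"
    unfolding Sop_def by (rule Phi_sum) (use f fin_sa in \<open>auto simp: fin_def[symmetric]\<close>)
  also have "\<dots> = (\<lambda>Q. \<Sum>M\<in>supp x. x M * (\<lambda>P. Phi (sa P) Q) (pack M))"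
    using Phi_sa_pack by simp
  also have "\<dots> = (\<lambda>_. 0)"
  proof
    fix Q show "(\<Sum>M\<in>supp x. x M * (\<lambda>P. Phi (sa P) Q) (pack M)) = 0"
      using group_zero[OF x, of "\<lambda>P. Phi (sa P) Q"] by simp
  qed
  finally show ?thesis using fin_Sop[OF f] by (simp add: Iid_char)
qed

lemma mult_lin_left: assumes "finite T"
  shows "mult (lin T c g) (delta B) = lin T c (\<lambda>t. blockdiag (g t) B)"
proof
  fix N
  have "mult (lin T c g) (delta B) N = (\<Sum>M\<in>supp (lin T c g). if blockdiag M B = N then lin T c g M else 0)"
    unfolding mult_def supp_delta by (simp add: delta_app cong: if_cong)
  also have "\<dots> = (\<Sum>M\<in>g ` T. if blockdiag M B = N then lin T c g M else 0)"
    using assms supp_lin[of T c g] by (intro sum_supp_super) auto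
  also have "\<dots> = (\<Sum>M\<in>g ` T. \<Sum>t\<in>T. if blockdiag M B = N then c t * delta (g t) M else 0)"
    by (intro sum.cong refl) (simp add: lin_def)
  also have "\<dots> = (\<Sum>t\<in>T. \<Sum>M\<in>g ` T. if blockdiag M B = N then c t * delta (g t) M else 0)"
    by (rule sum.swap)
  also have "\<dots> = (\<Sum>t\<in>T. if blockdiag (g t) B = N then c t else 0)"
    using assms by (intro sum.cong refl sum_pickP) auto
  also have "\<dots> = lin T c (\<lambda>t. blockdiag (g t) B) N"
    unfolding lin_def by (intro sum.cong refl) (simp add: delta_def)
  finally show "mult (lin T c g) (delta B) N = lin T c (\<lambda>t. blockdiag (g t) B) N" .
qed

lemma mult_lin_right: assumes "finite T"
  shows "mult (delta A) (lin T c g) = lin T c (\<lambda>t. blockdiag A (g t))"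
proof
  fix N
  have "mult (delta A) (lin T c g) N = (\<Sum>M\<in>supp (lin T c g). if blockdiag A M = N then lin T c g M else 0)"
    unfolding mult_def supp_delta by (simp add: delta_app cong: if_cong)
  also have "\<dots> = (\<Sum>M\<in>g ` T. if blockdiag A M = N then lin T c g M else 0)"
    using assms supp_lin[of T c g] by (intro sum_supp_super) auto
  also have "\<dots> = (\<Sum>M\<in>g ` T. \<Sum>t\<in>T. if blockdiag A M = N then c t * delta (g t) M else 0)"
    by (intro sum.cong refl) (simp add: lin_def)
  also have "\<dots> = (\<Sum>t\<in>T. \<Sum>M\<in>g ` T. if blockdiag A M = N then c t * delta (g t) M else 0)"
    by (rule sum.swap)
  also have "\<dots> = (\<Sum>t\<in>T. if blockdiag A (g t) = N then c t else 0)"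
    using assms by (intro sum.cong refl sum_pickP) auto
  also have "\<dots> = lin T c (\<lambda>t. blockdiag A (g t)) N"
    unfolding lin_def by (intro sum.cong refl) (simp add: delta_def)
  finally show "mult (delta A) (lin T c g) N = lin T c (\<lambda>t. blockdiag A (g t)) N" .
qed

lemma supp_cop_delta: "supp (cop (delta M)) = dec M"
  by (auto simp: supp_def cop_delta)

lemma cop_delta_sum: "(\<Sum>AB\<in>supp (cop (delta M)). cop (delta M) AB * H AB) = (\<Sum>AB\<in>dec M. H AB)"
  unfolding supp_cop_delta by (intro sum.cong refl) (simp add: cop_delta)

lemma supp_cop: "supp (cop x) = (\<Union>M\<in>supp x. dec M)"
proof
  show "supp (cop x) \<subseteq> (\<Union>M\<in>supp x. dec M)"
  proof
    fix t assume t: "t \<in> supp (cop x)"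
    obtain A B where ab: "t = (A,B)" by (cases t)
    then have "same_shape A B" "x (madd A B) \<noteq> 0" using t by (auto simp: supp_def cop_def split: if_splits)
    then show "t \<in> (\<Union>M\<in>supp x. dec M)" using ab by (auto simp: dec_def supp_def)
  qed
  show "(\<Union>M\<in>supp x. dec M) \<subseteq> supp (cop x)"
    by (auto simp: dec_def supp_def cop_def)
qed

lemma cop_sum_group: assumes "fin x"
  shows "(\<Sum>AB\<in>supp (cop x). cop x AB * H AB) = (\<Sum>M\<in>supp x. x M * (\<Sum>AB\<in>dec M. H AB))"
proof -
  have f: "finite (supp x)" using assms by (simp add: fin_def)
  have "(\<Sum>AB\<in>supp (cop x). cop x AB * H AB) = (\<Sum>M\<in>supp x. \<Sum>AB\<in>dec M. cop x AB * H AB)"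
    unfolding supp_cop
  proof (rule sum.UNION_disjoint[OF f])
    show "\<forall>M\<in>supp x. finite (dec M)" using finite_dec by simp
    show "\<forall>M\<in>supp x. \<forall>M'\<in>supp x. M \<noteq> M' \<longrightarrow> dec M \<inter> dec M' = {}"
      by (auto simp: dec_def)
  qed
  also have "\<dots> = (\<Sum>M\<in>supp x. x M * (\<Sum>AB\<in>dec M. H AB))"
  proof (intro sum.cong refl)
    fix M
    have "\<And>AB. AB \<in> dec M \<Longrightarrow> cop x AB = x M" by (auto simp: dec_def cop_def)
    then show "(\<Sum>AB\<in>dec M. cop x AB * H AB) = x M * (\<Sum>AB\<in>dec M. H AB)"
      by (simp add: sum_distrib_left)
  qed
  finally show ?thesis .
qed

lemma convL_lin: "fin x \<Longrightarrow> convL S x = (\<lambda>N. \<Sum>M\<in>supp x. x M * convL S (delta M) N)"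
  unfolding convL_def by (intro ext) (simp add: cop_sum_group cop_delta_sum)

lemma convR_lin: "fin x \<Longrightarrow> convR S x = (\<lambda>N. \<Sum>M\<in>supp x. x M * convR S (delta M) N)"
  unfolding convR_def by (intro ext) (simp add: cop_sum_group cop_delta_sum)

definition TL :: "mat \<Rightarrow> ((mat \<times> mat) \<times> mat list) set" where
  "TL M = Sigma (dec M) (\<lambda>t. D (fst t))"
definition TR :: "mat \<Rightarrow> ((mat \<times> mat) \<times> mat list) set" where
  "TR M = Sigma (dec M) (\<lambda>t. D (snd t))"

lemma finite_TL: "finite (TL M)" unfolding TL_def by (intro finite_SigmaI finite_dec finite_D)
lemma finite_TR: "finite (TR M)" unfolding TR_def by (intro finite_SigmaI finite_dec finite_D)

lemma convL_delta: "convL Sop (delta M) = lin (TL M) (\<lambda>u. sg (snd u)) (\<lambda>u. blockdiag (bdl (snd u)) (snd (fst u)))"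
proof
  fix N
  have "convL Sop (delta M) N = (\<Sum>AB\<in>dec M. mult (sa (fst AB)) (delta (snd AB)) N)"
    unfolding convL_def cop_delta_sum Sop_delta by simp
  also have "\<dots> = (\<Sum>AB\<in>dec M. \<Sum>xs\<in>D (fst AB). sg xs * delta (blockdiag (bdl xs) (snd AB)) N)"
  proof (intro sum.cong refl)
    fix AB show "mult (sa (fst AB)) (delta (snd AB)) N = (\<Sum>xs\<in>D (fst AB). sg xs * delta (blockdiag (bdl xs) (snd AB)) N)"
      unfolding sa_def mult_lin_left[OF finite_D] by (simp add: lin_def)
  qed
  also have "\<dots> = (\<Sum>u\<in>TL M. sg (snd u) * delta (blockdiag (bdl (snd u)) (snd (fst u))) N)"
    unfolding TL_def by (subst sum.Sigma) (auto simp: finite_dec finite_D split_def)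
  finally show "convL Sop (delta M) N = lin (TL M) (\<lambda>u. sg (snd u)) (\<lambda>u. blockdiag (bdl (snd u)) (snd (fst u))) N"
    by (simp add: lin_def)
qed

lemma convR_delta: "convR Sop (delta M) = lin (TR M) (\<lambda>u. sg (snd u)) (\<lambda>u. blockdiag (fst (fst u)) (bdl (snd u)))"
proof
  fix N
  have "convR Sop (delta M) N = (\<Sum>AB\<in>dec M. mult (delta (fst AB)) (sa (snd AB)) N)"
    unfolding convR_def cop_delta_sum Sop_delta by simp
  also have "\<dots> = (\<Sum>AB\<in>dec M. \<Sum>xs\<in>D (snd AB). sg xs * delta (blockdiag (fst AB) (bdl xs)) N)"
  proof (intro sum.cong refl)
    fix AB show "mult (delta (fst AB)) (sa (snd AB)) N = (\<Sum>xs\<in>D (snd AB). sg xs * delta (blockdiag (fst AB) (bdl xs)) N)"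
      unfolding sa_def mult_lin_right[OF finite_D] by (simp add: lin_def)
  qed
  also have "\<dots> = (\<Sum>u\<in>TR M. sg (snd u) * delta (blockdiag (fst (fst u)) (bdl (snd u))) N)"
    unfolding TR_def by (subst sum.Sigma) (auto simp: finite_dec finite_D split_def)
  finally show "convR Sop (delta M) N = lin (TR M) (\<lambda>u. sg (snd u)) (\<lambda>u. blockdiag (fst (fst u)) (bdl (snd u))) N"
    by (simp add: lin_def)
qed


definition zM :: "mat \<Rightarrow> mat" where "zM M = mk (rows M) (cols M) (\<lambda>_ _. 0)"

lemma zM_parts[simp]: "rows (zM M) = rows M" "cols (zM M) = cols M" "entry (zM M) i j = 0"
  using mk_parts[OF rows0_iff[of M]] by (auto simp: zM_def)

lemma weight_zM[simp]: "weight (zM M) = 0" by (simp add: weight0_iff)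
lemma pack_zM[simp]: "pack (zM M) = emptyM" by (simp add: pack_zero)

lemma ss_trans: "same_shape A B \<Longrightarrow> same_shape B C \<Longrightarrow> same_shape A C"
  by (simp add: same_shape_def)

lemma zero_eq: "same_shape B M \<Longrightarrow> weight B = 0 \<Longrightarrow> B = zM M"
  by (rule mat_eq) (auto simp: same_shape_def weight0_iff)

lemma dec_ss: "(A,B) \<in> dec M \<Longrightarrow> same_shape A M \<and> same_shape B M"
  using dec_le by (auto simp: le_def)

lemma dec_entry: "(A,B) \<in> dec M \<Longrightarrow> entry M i j = entry A i j + entry B i j"
  using dec_LS[of A B M] by (simp add: LS_def)

lemma dec_I: "same_shape A M \<Longrightarrow> same_shape B M \<Longrightarrow> (\<And>i j. entry M i j = entry A i j + entry B i j) \<Longrightarrow> (A,B) \<in> dec M"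
  using dec_LS[of A B M] by (simp add: LS_def)

lemma dec_MzM: "(M, zM M) \<in> dec M" by (rule dec_I) (auto simp: same_shape_def)
lemma dec_zMM: "(zM M, M) \<in> dec M" by (rule dec_I) (auto simp: same_shape_def)

lemma dec_zM_right: "(A, zM M) \<in> dec M \<Longrightarrow> A = M"
  using dec_ss[of A "zM M" M] dec_entry[of A "zM M" M] by (intro mat_eq) (auto simp: same_shape_def)
lemma dec_zM_left: "(zM M, B) \<in> dec M \<Longrightarrow> B = M"
  using dec_ss[of "zM M" B M] dec_entry[of "zM M" B M] by (intro mat_eq) (auto simp: same_shape_def)

definition msum :: "mat \<Rightarrow> mat list \<Rightarrow> mat" where
  "msum M xs = mk (rows M) (cols M) (\<lambda>i j. \<Sum>X\<leftarrow>xs. entry X i j)"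

lemma msum_shape: "same_shape (msum M xs) M"
  using mk_parts[OF rows0_iff[of M]] by (simp add: msum_def same_shape_def)

lemma sum_list_0: "(\<forall>X\<in>set xs. f X = 0) \<Longrightarrow> (\<Sum>X\<leftarrow>xs. f X) = (0::nat)"
  by (induction xs) auto

lemma msum_entry: assumes "\<forall>X\<in>set xs. same_shape X M"
  shows "entry (msum M xs) i j = (\<Sum>X\<leftarrow>xs. entry X i j)"
proof (cases "i < rows M \<and> j < cols M")
  case True then show ?thesis using mk_parts[OF rows0_iff[of M]] by (simp add: msum_def)
next
  case False
  then have "\<forall>X\<in>set xs. entry X i j = 0" using assms entry_out by (auto simp: same_shape_def)
  then have "(\<Sum>X\<leftarrow>xs. entry X i j) = 0" by (rule sum_list_0)
  moreover have "entry (msum M xs) i j = 0" using False mk_parts[OF rows0_iff[of M]] by (auto simp: msum_def)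
  ultimately show ?thesis by simp
qed

lemma D_Nil: "[] \<in> D M \<longleftrightarrow> weight M = 0"
  by (simp add: D_def LS_def weight0_iff)

lemma D_ss: "xs \<in> D A \<Longrightarrow> X \<in> set xs \<Longrightarrow> same_shape X A" by (simp add: D_def LS_def)
lemma D_w: "xs \<in> D A \<Longrightarrow> X \<in> set xs \<Longrightarrow> 0 < weight X" by (simp add: D_def)
lemma D_entry: "xs \<in> D A \<Longrightarrow> entry A i j = (\<Sum>X\<leftarrow>xs. entry X i j)" by (simp add: D_def LS_def)

lemma D_I: "(\<forall>X\<in>set xs. same_shape X A \<and> 0 < weight X) \<Longrightarrow> (\<And>i j. entry A i j = (\<Sum>X\<leftarrow>xs. entry X i j)) \<Longrightarrow> xs \<in> D A"
  by (simp add: D_def LS_def)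

lemma msum_D: "xs \<in> D A \<Longrightarrow> same_shape A M \<Longrightarrow> msum M xs = A"
proof (rule mat_eq)
  assume xs: "xs \<in> D A" and s: "same_shape A M"
  show "rows (msum M xs) = rows A" "cols (msum M xs) = cols A" using msum_shape[of M xs] s by (auto simp: same_shape_def)
  fix i j
  have "\<forall>X\<in>set xs. same_shape X M" using D_ss[OF xs] s ss_trans by blast
  then show "entry (msum M xs) i j = entry A i j" using msum_entry D_entry[OF xs] by simp
qed

definition T0L where "T0L M = (\<lambda>xs. ((M, zM M), xs)) ` D M"
definition hL :: "(mat \<times> mat) \<times> mat list \<Rightarrow> mat list" where "hL u = snd u @ [snd (fst u)]"
definition kL where "kL M ys = ((msum M (butlast ys), last ys), butlast ys)"

lemma T0L_sub: "T0L M \<subseteq> TL M"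
  using dec_MzM by (auto simp: T0L_def TL_def)

lemma bijL: "bij_betw hL (TL M - T0L M) (D M - {[]})"
proof (rule bij_betw_byWitness[where f'="kL M"])
  show "\<forall>u\<in>TL M - T0L M. kL M (hL u) = u"
  proof
    fix u assume u: "u \<in> TL M - T0L M"
    obtain A B xs where ux: "u = ((A,B),xs)" by (metis prod.collapse)
    then have ab: "(A,B) \<in> dec M" and xs: "xs \<in> D A" using u by (auto simp: TL_def)
    show "kL M (hL u) = u" using msum_D[OF xs] dec_ss[OF ab] ux by (simp add: kL_def hL_def)
  qed
  show "\<forall>ys\<in>D M - {[]}. hL (kL M ys) = ys" by (simp add: kL_def hL_def)
  show "hL ` (TL M - T0L M) \<subseteq> D M - {[]}"
  proof
    fix y assume "y \<in> hL ` (TL M - T0L M)"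
    then obtain u where u: "u \<in> TL M - T0L M" "y = hL u" by auto
    obtain A B xs where ux: "u = ((A,B),xs)" by (metis prod.collapse)
    then have ab: "(A,B) \<in> dec M" and xs: "xs \<in> D A" and n0: "u \<notin> T0L M" using u by (auto simp: TL_def)
    have y: "y = xs @ [B]" using u ux by (simp add: hL_def)
    have wB: "0 < weight B"
    proof (rule ccontr)
      assume "\<not> 0 < weight B"
      then have "B = zM M" using zero_eq dec_ss[OF ab] by auto
      then have "A = M" using dec_zM_right ab by simp
      then have "u \<in> T0L M" using ux xs \<open>B = zM M\<close> by (auto simp: T0L_def)
      then show False using n0 by simp
    qed
    have "y \<in> D M"
    proof (rule D_I)
      show "\<forall>X\<in>set y. same_shape X M \<and> 0 < weight X"
        using y D_ss[OF xs] D_w[OF xs] dec_ss[OF ab] wB by (auto simp: same_shape_def)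
      fix i j show "entry M i j = (\<Sum>X\<leftarrow>y. entry X i j)"
        using dec_entry[OF ab] D_entry[OF xs] y by simp
    qed
    then show "y \<in> D M - {[]}" using y by simp
  qed
  show "kL M ` (D M - {[]}) \<subseteq> TL M - T0L M"
  proof
    fix u assume "u \<in> kL M ` (D M - {[]})"
    then obtain ys where ys: "ys \<in> D M" "ys \<noteq> []" "u = kL M ys" by auto
    define xs where "xs = butlast ys"
    define B where "B = last ys"
    define A where "A = msum M xs"
    have yse: "ys = xs @ [B]" using ys by (simp add: xs_def B_def)
    have ssx: "\<forall>X\<in>set xs. same_shape X M" using D_ss[OF ys(1)] yse by auto
    have sB: "same_shape B M" using D_ss[OF ys(1)] yse by auto
    have wB: "0 < weight B" using D_w[OF ys(1)] yse by auto
    have sA: "same_shape A M" by (simp add: A_def msum_shape)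
    have ab: "(A,B) \<in> dec M"
    proof (rule dec_I[OF sA sB])
      fix i j show "entry M i j = entry A i j + entry B i j"
        using D_entry[OF ys(1), of i j] yse msum_entry[OF ssx] by (simp add: A_def)
    qed
    have xsD: "xs \<in> D A"
    proof (rule D_I)
      show "\<forall>X\<in>set xs. same_shape X A \<and> 0 < weight X"
        using ssx sA D_w[OF ys(1)] yse by (auto simp: same_shape_def)
      fix i j show "entry A i j = (\<Sum>X\<leftarrow>xs. entry X i j)" using msum_entry[OF ssx] by (simp add: A_def)
    qed
    have ue: "u = ((A,B),xs)" using ys by (simp add: kL_def A_def B_def xs_def)
    have "u \<in> TL M" using ab xsD ue by (simp add: TL_def)
    moreover have "u \<notin> T0L M"
    proof
      assume "u \<in> T0L M"
      then have "B = zM M" using ue by (auto simp: T0L_def)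
      then show False using wB by simp
    qed
    ultimately show "u \<in> TL M - T0L M" by simp
  qed
qed

lemma sum_minus_Nil: assumes "finite S"
  shows "(\<Sum>ys\<in>S. g ys) - (\<Sum>ys\<in>S - {[]}. g ys) = (if [] \<in> S then g [] else (0::rat))"
proof (cases "[] \<in> S")
  case True then show ?thesis using sum.remove[OF assms True, of g] by simp
next
  case False then show ?thesis by simp
qed

lemma Phi_convL: "Phi (convL Sop (delta M)) = (\<lambda>Q. (if weight M = 0 then 1 else 0) * delta emptyM Q)"
proof
  fix Q
  define f where "f u = sg (snd u) * delta (pack (blockdiag (bdl (snd u)) (snd (fst u)))) Q" for u :: "(mat \<times> mat) \<times> mat list"
  define g where "g ys = sg ys * delta (pack (bdl ys)) Q" for ys
  have "Phi (convL Sop (delta M)) Q = (\<Sum>u\<in>TL M. f u)"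
    unfolding convL_delta Phi_lin[OF finite_TL] by (simp add: lin_def f_def)
  also have "\<dots> = (\<Sum>u\<in>TL M - T0L M. f u) + (\<Sum>u\<in>T0L M. f u)"
    by (rule sum.subset_diff[OF T0L_sub finite_TL])
  also have "(\<Sum>u\<in>T0L M. f u) = (\<Sum>xs\<in>D M. g xs)"
    unfolding T0L_def by (subst sum.reindex) (auto simp: inj_on_def f_def g_def pack_bd)
  also have "(\<Sum>u\<in>TL M - T0L M. f u) = (\<Sum>u\<in>TL M - T0L M. - g (hL u))"
    by (intro sum.cong refl) (simp add: f_def g_def hL_def sg_snoc bdl_snoc)
  also have "\<dots> = - (\<Sum>ys\<in>D M - {[]}. g ys)"
    using sum.reindex_bij_betw[OF bijL[of M], of g] by (simp add: sum_negf)
  also have "- (\<Sum>ys\<in>D M - {[]}. g ys) + (\<Sum>xs\<in>D M. g xs) = (if [] \<in> D M then g [] else 0)"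
    using sum_minus_Nil[OF finite_D[of M], where g=g] by simp
  also have "\<dots> = (if weight M = 0 then 1 else 0) * delta emptyM Q"
    by (simp add: D_Nil g_def)
  finally show "Phi (convL Sop (delta M)) Q = (if weight M = 0 then 1 else 0) * delta emptyM Q" .
qed

definition T0R where "T0R M = (\<lambda>xs. ((zM M, M), xs)) ` D M"
definition hR :: "(mat \<times> mat) \<times> mat list \<Rightarrow> mat list" where "hR u = fst (fst u) # snd u"
definition kR where "kR M ys = ((hd ys, msum M (tl ys)), tl ys)"

lemma T0R_sub: "T0R M \<subseteq> TR M"
  using dec_zMM by (auto simp: T0R_def TR_def)

lemma bijR: "bij_betw hR (TR M - T0R M) (D M - {[]})"
proof (rule bij_betw_byWitness[where f'="kR M"])
  show "\<forall>u\<in>TR M - T0R M. kR M (hR u) = u"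
  proof
    fix u assume u: "u \<in> TR M - T0R M"
    obtain A B xs where ux: "u = ((A,B),xs)" by (metis prod.collapse)
    then have ab: "(A,B) \<in> dec M" and xs: "xs \<in> D B" using u by (auto simp: TR_def)
    show "kR M (hR u) = u" using msum_D[OF xs] dec_ss[OF ab] ux by (simp add: kR_def hR_def)
  qed
  show "\<forall>ys\<in>D M - {[]}. hR (kR M ys) = ys" by (simp add: kR_def hR_def)
  show "hR ` (TR M - T0R M) \<subseteq> D M - {[]}"
  proof
    fix y assume "y \<in> hR ` (TR M - T0R M)"
    then obtain u where u: "u \<in> TR M - T0R M" "y = hR u" by auto
    obtain A B xs where ux: "u = ((A,B),xs)" by (metis prod.collapse)
    then have ab: "(A,B) \<in> dec M" and xs: "xs \<in> D B" and n0: "u \<notin> T0R M" using u by (auto simp: TR_def)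
    have y: "y = A # xs" using u ux by (simp add: hR_def)
    have wA: "0 < weight A"
    proof (rule ccontr)
      assume "\<not> 0 < weight A"
      then have "A = zM M" using zero_eq dec_ss[OF ab] by auto
      then have "B = M" using dec_zM_left ab by simp
      then have "u \<in> T0R M" using ux xs \<open>A = zM M\<close> by (auto simp: T0R_def)
      then show False using n0 by simp
    qed
    have "y \<in> D M"
    proof (rule D_I)
      show "\<forall>X\<in>set y. same_shape X M \<and> 0 < weight X"
        using y D_ss[OF xs] D_w[OF xs] dec_ss[OF ab] wA by (auto simp: same_shape_def)
      fix i j show "entry M i j = (\<Sum>X\<leftarrow>y. entry X i j)"
        using dec_entry[OF ab] D_entry[OF xs] y by simp
    qed
    then show "y \<in> D M - {[]}" using y by simp
  qed
  show "kR M ` (D M - {[]}) \<subseteq> TR M - T0R M"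
  proof
    fix u assume "u \<in> kR M ` (D M - {[]})"
    then obtain ys where ys: "ys \<in> D M" "ys \<noteq> []" "u = kR M ys" by auto
    define xs where "xs = tl ys"
    define A where "A = hd ys"
    define B where "B = msum M xs"
    have yse: "ys = A # xs" using ys by (simp add: xs_def A_def)
    have ssx: "\<forall>X\<in>set xs. same_shape X M" using D_ss[OF ys(1)] yse by auto
    have sA: "same_shape A M" using D_ss[OF ys(1)] yse by auto
    have wA: "0 < weight A" using D_w[OF ys(1)] yse by auto
    have sB: "same_shape B M" by (simp add: B_def msum_shape)
    have ab: "(A,B) \<in> dec M"
    proof (rule dec_I[OF sA sB])
      fix i j show "entry M i j = entry A i j + entry B i j"
        using D_entry[OF ys(1), of i j] yse msum_entry[OF ssx] by (simp add: B_def)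
    qed
    have xsD: "xs \<in> D B"
    proof (rule D_I)
      show "\<forall>X\<in>set xs. same_shape X B \<and> 0 < weight X"
        using ssx sB D_w[OF ys(1)] yse by (auto simp: same_shape_def)
      fix i j show "entry B i j = (\<Sum>X\<leftarrow>xs. entry X i j)" using msum_entry[OF ssx] by (simp add: B_def)
    qed
    have ue: "u = ((A,B),xs)" using ys by (simp add: kR_def A_def B_def xs_def)
    have "u \<in> TR M" using ab xsD ue by (simp add: TR_def)
    moreover have "u \<notin> T0R M"
    proof
      assume "u \<in> T0R M"
      then have "A = zM M" using ue by (auto simp: T0R_def)
      then show False using wA by simp
    qed
    ultimately show "u \<in> TR M - T0R M" by simp
  qed
qed

lemma Phi_convR: "Phi (convR Sop (delta M)) = (\<lambda>Q. (if weight M = 0 then 1 else 0) * delta emptyM Q)"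
proof
  fix Q
  define f where "f u = sg (snd u) * delta (pack (blockdiag (fst (fst u)) (bdl (snd u)))) Q" for u :: "(mat \<times> mat) \<times> mat list"
  define g where "g ys = sg ys * delta (pack (bdl ys)) Q" for ys
  have "Phi (convR Sop (delta M)) Q = (\<Sum>u\<in>TR M. f u)"
    unfolding convR_delta Phi_lin[OF finite_TR] by (simp add: lin_def f_def)
  also have "\<dots> = (\<Sum>u\<in>TR M - T0R M. f u) + (\<Sum>u\<in>T0R M. f u)"
    by (rule sum.subset_diff[OF T0R_sub finite_TR])
  also have "(\<Sum>u\<in>T0R M. f u) = (\<Sum>xs\<in>D M. g xs)"
    unfolding T0R_def by (subst sum.reindex) (auto simp: inj_on_def f_def g_def pack_bd)
  also have "(\<Sum>u\<in>TR M - T0R M. f u) = (\<Sum>u\<in>TR M - T0R M. - g (hR u))"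
    by (intro sum.cong refl) (simp add: f_def g_def hR_def)
  also have "\<dots> = - (\<Sum>ys\<in>D M - {[]}. g ys)"
    using sum.reindex_bij_betw[OF bijR[of M], of g] by (simp add: sum_negf)
  also have "- (\<Sum>ys\<in>D M - {[]}. g ys) + (\<Sum>xs\<in>D M. g xs) = (if [] \<in> D M then g [] else 0)"
    using sum_minus_Nil[OF finite_D[of M], where g=g] by simp
  also have "\<dots> = (if weight M = 0 then 1 else 0) * delta emptyM Q"
    by (simp add: D_Nil g_def)
  finally show "Phi (convR Sop (delta M)) Q = (if weight M = 0 then 1 else 0) * delta emptyM Q" .
qed


definition eps :: "mat \<Rightarrow> rat" where "eps M = (if weight M = 0 then 1 else 0)"

lemma counit_eps: "counit x = (\<Sum>M\<in>supp x. x M * eps M)"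
  unfolding counit_def eps_def by (intro sum.cong refl) simp

lemma fin_convL_delta: "fin (convL Sop (delta M))"
  unfolding convL_delta by (rule fin_lin[OF finite_TL])
lemma fin_convR_delta: "fin (convR Sop (delta M))"
  unfolding convR_delta by (rule fin_lin[OF finite_TR])

lemma wL_Iid: "(\<lambda>N. convL Sop (delta M) N - eps M * delta emptyM N) \<in> Iid"
proof -
  have f1: "fin (convL Sop (delta M))" by (rule fin_convL_delta)
  have f2: "fin (\<lambda>N. eps M * delta emptyM N)" by (rule fin_scale) simp
  have "Phi (\<lambda>N. convL Sop (delta M) N - eps M * delta emptyM N) = (\<lambda>_. 0)"
    unfolding Phi_diff[OF f1 f2] Phi_convL Phi_scale_delta by (simp add: eps_def)
  then show ?thesis using fin_diff[OF f1 f2] by (simp add: Iid_char)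
qed

lemma wR_Iid: "(\<lambda>N. convR Sop (delta M) N - eps M * delta emptyM N) \<in> Iid"
proof -
  have f1: "fin (convR Sop (delta M))" by (rule fin_convR_delta)
  have f2: "fin (\<lambda>N. eps M * delta emptyM N)" by (rule fin_scale) simp
  have "Phi (\<lambda>N. convR Sop (delta M) N - eps M * delta emptyM N) = (\<lambda>_. 0)"
    unfolding Phi_diff[OF f1 f2] Phi_convR Phi_scale_delta by (simp add: eps_def)
  then show ?thesis using fin_diff[OF f1 f2] by (simp add: Iid_char)
qed

lemma antipode_L: assumes f: "fin x" shows "(\<lambda>N. convL Sop x N - counit x * delta emptyM N) \<in> Iid"
proof -
  have e: "(\<lambda>N. convL Sop x N - counit x * delta emptyM N)
     = (\<lambda>N. \<Sum>M\<in>supp x. x M * (convL Sop (delta M) N - eps M * delta emptyM N))"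
    unfolding convL_lin[OF f] counit_eps
    by (simp add: sum_subtractf sum_distrib_right right_diff_distrib mult.assoc)
  have "(\<lambda>N. \<Sum>M\<in>supp x. x M * (convL Sop (delta M) N - eps M * delta emptyM N)) \<in> Iid"
    unfolding Iid_def by (rule lspan_sum) (use f wL_Iid in \<open>auto simp: fin_def Iid_def\<close>)
  then show ?thesis unfolding e .
qed

lemma antipode_R: assumes f: "fin x" shows "(\<lambda>N. convR Sop x N - counit x * delta emptyM N) \<in> Iid"
proof -
  have e: "(\<lambda>N. convR Sop x N - counit x * delta emptyM N)
     = (\<lambda>N. \<Sum>M\<in>supp x. x M * (convR Sop (delta M) N - eps M * delta emptyM N))"
    unfolding convR_lin[OF f] counit_eps
    by (simp add: sum_subtractf sum_distrib_right right_diff_distrib mult.assoc)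
  have "(\<lambda>N. \<Sum>M\<in>supp x. x M * (convR Sop (delta M) N - eps M * delta emptyM N)) \<in> Iid"
    unfolding Iid_def by (rule lspan_sum) (use f wR_Iid in \<open>auto simp: fin_def Iid_def\<close>)
  then show ?thesis unfolding e .
qed

theorem mainTheorem2:
  shows
  \<comment> \<open>I is a biideal\<close>
  "(\<forall>x y. fin x \<longrightarrow> y \<in> Iid \<longrightarrow> mult x y \<in> Iid \<and> mult y x \<in> Iid)
   \<and> (\<forall>x\<in>Iid. cop x \<in> Jid)
   \<and> (\<forall>x\<in>Iid. counit x = 0)
   \<comment> \<open>the quotient H/I is a Hopf algebra: an antipode exists (linear map on H preserving I)\<close>
   \<and> (\<exists>S. linear_map S \<and> (\<forall>x\<in>Iid. S x \<in> Iid) \<and>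
        (\<forall>x. fin x \<longrightarrow> (\<lambda>N. convL S x N - counit x * delta emptyM N) \<in> Iid
                     \<and> (\<lambda>N. convR S x N - counit x * delta emptyM N) \<in> Iid))
   \<comment> \<open>graded by the weight: I is homogeneous, product/coproduct/counit respect weight\<close>
   \<and> (\<forall>x\<in>Iid. \<forall>n. hpart n x \<in> Iid)
   \<and> (\<forall>m n x y. fin x \<longrightarrow> fin y \<longrightarrow> homog m x \<longrightarrow> homog n y \<longrightarrow> homog (m + n) (mult x y))
   \<and> (\<forall>n x A B. fin x \<longrightarrow> homog n x \<longrightarrow> cop x (A, B) \<noteq> 0 \<longrightarrow> weight A + weight B = n)
   \<and> (\<forall>n x. fin x \<longrightarrow> homog n x \<longrightarrow> 0 < n \<longrightarrow> counit x = 0)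
   \<comment> \<open>connected: the weight-0 part of H/I is spanned by the class of the unit\<close>
   \<and> (\<forall>x. fin x \<longrightarrow> homog 0 x \<longrightarrow> (\<exists>c. (\<lambda>N. x N - c * delta emptyM N) \<in> Iid))
   \<comment> \<open>the classes of packed matrices form a basis of H/I\<close>
   \<and> (\<forall>x. fin x \<longrightarrow> (\<exists>y. fin y \<and> (\<forall>M. y M \<noteq> 0 \<longrightarrow> packed M) \<and> (\<lambda>N. x N - y N) \<in> Iid))
   \<and> (\<forall>y. fin y \<longrightarrow> (\<forall>M. y M \<noteq> 0 \<longrightarrow> packed M) \<longrightarrow> y \<in> Iid \<longrightarrow> y = (\<lambda>_. 0))
   \<comment> \<open>product on packed matrices: block diagonal (again packed)\<close>
   \<and> (\<forall>P Q. packed P \<longrightarrow> packed Q \<longrightarrow> packed (blockdiag P Q)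
          \<and> mult (delta P) (delta Q) = delta (blockdiag P Q))
   \<comment> \<open>coproduct on packed matrices, modulo I \<otimes> H + H \<otimes> I\<close>
   \<and> (\<forall>P. packed P \<longrightarrow>
        (\<lambda>AB. cop (delta P) AB
              - (\<Sum>(A, B)\<in>{(A, B). same_shape A B \<and> same_shape A P \<and> madd A B = P}.
                    tens (delta (pack A)) (delta (pack B)) AB)) \<in> Jid)"
proof (intro conjI)
  show "\<forall>x y. fin x \<longrightarrow> y \<in> Iid \<longrightarrow> mult x y \<in> Iid \<and> mult y x \<in> Iid"
    using ideal_right ideal_left by blast
  show "\<forall>x\<in>Iid. cop x \<in> Jid" using cop_Iid by blast
  show "\<forall>x\<in>Iid. counit x = 0" using counit_Iid by blast
  show "\<exists>S. linear_map S \<and> (\<forall>x\<in>Iid. S x \<in> Iid) \<and>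
        (\<forall>x. fin x \<longrightarrow> (\<lambda>N. convL S x N - counit x * delta emptyM N) \<in> Iid
                     \<and> (\<lambda>N. convR S x N - counit x * delta emptyM N) \<in> Iid)"
    using linear_Sop Sop_Iid antipode_L antipode_R by blast
  show "\<forall>x\<in>Iid. \<forall>n. hpart n x \<in> Iid" using hpart_Iid by blast
  show "\<forall>m n x y. fin x \<longrightarrow> fin y \<longrightarrow> homog m x \<longrightarrow> homog n y \<longrightarrow> homog (m + n) (mult x y)"
    using homog_mult by blast
  show "\<forall>n x A B. fin x \<longrightarrow> homog n x \<longrightarrow> cop x (A, B) \<noteq> 0 \<longrightarrow> weight A + weight B = n"
    using homog_cop by blast
  show "\<forall>n x. fin x \<longrightarrow> homog n x \<longrightarrow> 0 < n \<longrightarrow> counit x = 0" using counit_homog by blast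
  show "\<forall>x. fin x \<longrightarrow> homog 0 x \<longrightarrow> (\<exists>c. (\<lambda>N. x N - c * delta emptyM N) \<in> Iid)"
    using connected by blast
  show "\<forall>x. fin x \<longrightarrow> (\<exists>y. fin y \<and> (\<forall>M. y M \<noteq> 0 \<longrightarrow> packed M) \<and> (\<lambda>N. x N - y N) \<in> Iid)"
    using basis1 by blast
  show "\<forall>y. fin y \<longrightarrow> (\<forall>M. y M \<noteq> 0 \<longrightarrow> packed M) \<longrightarrow> y \<in> Iid \<longrightarrow> y = (\<lambda>_. 0)"
    using basis2 by blast
  show "\<forall>P Q. packed P \<longrightarrow> packed Q \<longrightarrow> packed (blockdiag P Q)
          \<and> mult (delta P) (delta Q) = delta (blockdiag P Q)"
    using packed_bd mult_delta by blast
  show "\<forall>P. packed P \<longrightarrow>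
        (\<lambda>AB. cop (delta P) AB
              - (\<Sum>(A, B)\<in>{(A, B). same_shape A B \<and> same_shape A P \<and> madd A B = P}.
                    tens (delta (pack A)) (delta (pack B)) AB)) \<in> Jid"
    using cop_packed by blast
qed


end
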